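(* Let $G$ be a grid-labelled graph of type $(a,b)$ with at least one edge that is row stratified or column stratified. Then $\rho(G)$ is separable if and only if $G$ satisfies the degree criterion.
   Context: A grid-labelled graph of type $(a,b)$ is a simple graph $G$ whose vertex set is the grid $[a]\times[b]$. If $G$ has $m\ge1$ edges, $\rho(G)=L(G)/(2m)$, where $L(G)$ is the combinatorial Laplacian, viewed as a density matrix on $\mathbb{C}^a\otimes\mathbb{C}^b$ with vertex $(i,j)$ corresponding to $|i\rangle\otimes|j\rangle$; separable means a convex combination of tensor products of density matrices. An edge $\{(i,j),(k,l)\}$ is diagonal if $i\neq k$ and $j\neq l$. $G$ is row stratified if every diagonal edge $\{(i,j),(k,l)\}$ satisfies $|i-k|=1$, and column stratified if every diagonal edge satisfies $|j-l|=1$. The partial transpose $\Gamma(G)$ is the grid-labelled graph with edge set $\{\{(k,j),(i,l)\}:\{(i,j),(k,l)\}\in E(G)\}$; $G$ satisfies the degree criterion if every vertex has the same degree in $G$ and in $\Gamma(G)$. *)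

theory Defs
  imports Complex_Main
begin

text \<open>Vertices are pairs (i,j) with 0 \<le> i < a, 0 \<le> j < b (0-based version of [a] x [b]).
  Vertex (i,j) corresponds to basis vector |i> \<otimes> |j>.\<close>

type_synonym vert = "nat \<times> nat"

definition grid :: "nat \<Rightarrow> nat \<Rightarrow> vert set" where
  "grid a b = {0..<a} \<times> {0..<b}"

definition grid_graph :: "nat \<Rightarrow> nat \<Rightarrow> vert set set \<Rightarrow> bool" where
  "grid_graph a b E \<longleftrightarrow> (\<forall>e\<in>E. \<exists>u v. u \<noteq> v \<and> u \<in> grid a b \<and> v \<in> grid a b \<and> e = {u, v})"

definition degree :: "vert set set \<Rightarrow> vert \<Rightarrow> nat" where
  "degree E v = card {e \<in> E. v \<in> e}"

definition laplacian :: "vert set set \<Rightarrow> vert \<Rightarrow> vert \<Rightarrow> complex" where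
  "laplacian E u v = (if u = v then of_nat (degree E u) else if {u, v} \<in> E then -1 else 0)"

definition rho :: "vert set set \<Rightarrow> vert \<Rightarrow> vert \<Rightarrow> complex" where
  "rho E u v = laplacian E u v / of_nat (2 * card E)"

definition density_matrix :: "nat \<Rightarrow> (nat \<Rightarrow> nat \<Rightarrow> complex) \<Rightarrow> bool" where
  "density_matrix n M \<longleftrightarrow>
     (\<forall>i<n. \<forall>j<n. M j i = cnj (M i j)) \<and>
     (\<forall>x :: nat \<Rightarrow> complex. Im (\<Sum>i<n. \<Sum>j<n. cnj (x i) * M i j * x j) = 0
                         \<and> Re (\<Sum>i<n. \<Sum>j<n. cnj (x i) * M i j * x j) \<ge> 0) \<and>
     (\<Sum>i<n. M i i) = 1"

definition separable :: "nat \<Rightarrow> nat \<Rightarrow> (vert \<Rightarrow> vert \<Rightarrow> complex) \<Rightarrow> bool" where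
  "separable a b R \<longleftrightarrow>
     (\<exists>(N::nat) (p :: nat \<Rightarrow> real) A B.
        (\<forall>t<N. p t \<ge> 0) \<and> (\<Sum>t<N. p t) = 1 \<and>
        (\<forall>t<N. density_matrix a (A t) \<and> density_matrix b (B t)) \<and>
        (\<forall>i<a. \<forall>j<b. \<forall>k<a. \<forall>l<b.
            R (i, j) (k, l) = (\<Sum>t<N. complex_of_real (p t) * A t i k * B t j l)))"

definition row_stratified :: "vert set set \<Rightarrow> bool" where
  "row_stratified E \<longleftrightarrow> (\<forall>i j k l. {(i, j), (k, l)} \<in> E \<and> i \<noteq> k \<and> j \<noteq> l
       \<longrightarrow> \<bar>int i - int k\<bar> = 1)"

definition column_stratified :: "vert set set \<Rightarrow> bool" where
  "column_stratified E \<longleftrightarrow> (\<forall>i j k l. {(i, j), (k, l)} \<in> E \<and> i \<noteq> k \<and> j \<noteq> l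
       \<longrightarrow> \<bar>int j - int l\<bar> = 1)"

definition partial_transpose :: "vert set set \<Rightarrow> vert set set" where
  "partial_transpose E = {{(k, j), (i, l)} | i j k l. {(i, j), (k, l)} \<in> E}"

definition degree_criterion :: "nat \<Rightarrow> nat \<Rightarrow> vert set set \<Rightarrow> bool" where
  "degree_criterion a b E \<longleftrightarrow> (\<forall>v\<in>grid a b. degree E v = degree (partial_transpose E) v)"

end

theory Submission
  imports Defs
begin

lemma root_sum:
  fixes L :: nat and d :: int assumes L: "L > 0"
  shows "(\<Sum>k<L. cis (2*pi*real k*of_int d/real L)) = (if int L dvd d then of_nat L else 0)"
proof -
  define z where "z = cis (2*pi*of_int d/real L)"
  have zk: "cis (2*pi*real k*of_int d/real L) = z^k" for k
    unfolding z_def DeMoivre by (simp add: mult_ac)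
  have zL: "z ^ L = 1"
  proof -
    have "z ^ L = cis (real L * (2*pi*of_int d/real L))" unfolding z_def DeMoivre ..
    also have "real L * (2*pi*of_int d/real L) = 2*pi*of_int d" using L by simp
    finally show ?thesis by simp
  qed
  show ?thesis
  proof (cases "int L dvd d")
    case True
    then obtain q where q: "d = int L * q" by (auto elim: dvdE)
    have "2*pi*of_int d/real L = 2*pi*of_int q" unfolding q using L by simp
    then have "z = 1" unfolding z_def using cis_multiple_2pi[of "of_int q"] by simp
    then show ?thesis using True by (simp add: zk)
  next
    case False
    have "z \<noteq> 1"
    proof
      assume "z = 1"
      then have "cos (2*pi*of_int d/real L) = 1" unfolding z_def
        by (metis complex.sel(1) cis.sel(1) one_complex.sel(1))
      then obtain n :: int where n: "2*pi*of_int d/real L = n*2*pi" by (auto simp: cos_one_2pi_int)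
      then have "of_int d = real L * of_int n" using L by (simp add: field_simps)
      then have "d = int L * n" by (metis of_int_eq_iff of_int_mult of_int_of_nat_eq)
      then show False using False by simp
    qed
    then show ?thesis using False by (simp add: zk geometric_sum zL)
  qed
qed

definition loopless :: "vert set set \<Rightarrow> bool" where
  "loopless E \<longleftrightarrow> (\<forall>e\<in>E. \<exists>u v. u \<noteq> v \<and> e = {u, v})"

definition nbr :: "vert set set \<Rightarrow> vert \<Rightarrow> vert set" where
  "nbr E v = {w. w \<noteq> v \<and> {v, w} \<in> E}"

definition tnbr :: "vert set set \<Rightarrow> vert \<Rightarrow> vert set" where
  "tnbr E v = {(k, l). (k, l) \<noteq> v \<and> {(fst v, l), (k, snd v)} \<in> E}"

lemma grid_graph_loopless: "grid_graph a b E \<Longrightarrow> loopless E"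
  unfolding grid_graph_def loopless_def by blast

lemma grid_graph_subset: "grid_graph a b E \<Longrightarrow> F \<subseteq> E \<Longrightarrow> grid_graph a b F"
  unfolding grid_graph_def by blast

lemma grid_graph_finite: assumes "grid_graph a b E" shows "finite E"
proof -
  have "E \<subseteq> Pow (grid a b)"
  proof
    fix e assume "e \<in> E"
    then obtain u v where "u \<in> grid a b" "v \<in> grid a b" "e = {u, v}"
      using assms unfolding grid_graph_def by meson
    then show "e \<in> Pow (grid a b)" by simp
  qed
  moreover have "finite (grid a b)" unfolding grid_def by simp
  ultimately show ?thesis by (meson finite_Pow_iff finite_subset)
qed

lemma degree_nbr: assumes "loopless E" shows "degree E v = card (nbr E v)"
proof -
  have "bij_betw (\<lambda>w. {v, w}) (nbr E v) {e \<in> E. v \<in> e}"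
  proof (rule bij_betwI')
    fix x y assume x: "x \<in> nbr E v" and y: "y \<in> nbr E v"
    then have "x \<noteq> v" "y \<noteq> v" unfolding nbr_def by simp_all
    then show "({v, x} = {v, y}) = (x = y)" by (metis doubleton_eq_iff)
  next
    fix x assume "x \<in> nbr E v" then show "{v, x} \<in> {e \<in> E. v \<in> e}" unfolding nbr_def by simp
  next
    fix e assume e: "e \<in> {e \<in> E. v \<in> e}"
    then obtain x y where xy: "x \<noteq> y" "e = {x, y}" "e \<in> E" "v \<in> e"
      using assms unfolding loopless_def by (metis (mono_tags, lifting) mem_Collect_eq)
    show "\<exists>w\<in>nbr E v. e = {v, w}"
    proof (cases "v = x")
      case True
      then show ?thesis using xy unfolding nbr_def by (intro bexI[of _ y]) auto
    next
      case False
      then have "v = y" using xy by simp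
      then show ?thesis using xy unfolding nbr_def by (intro bexI[of _ x]) (auto simp: insert_commute)
    qed
  qed
  then show ?thesis unfolding degree_def by (simp add: bij_betw_same_card)
qed

lemma pt_mem: "{(x1, y1), (x2, y2)} \<in> partial_transpose E \<longleftrightarrow> {(x2, y1), (x1, y2)} \<in> E"
proof
  assume "{(x1, y1), (x2, y2)} \<in> partial_transpose E"
  then obtain i j k l where h: "{(x1, y1), (x2, y2)} = {(k, j), (i, l)}" "{(i, j), (k, l)} \<in> E"
    unfolding partial_transpose_def by blast
  from h(1) have "((x1,y1) = (k,j) \<and> (x2,y2) = (i,l)) \<or> ((x1,y1) = (i,l) \<and> (x2,y2) = (k,j))"
    by (auto simp: doubleton_eq_iff)
  then show "{(x2, y1), (x1, y2)} \<in> E" using h(2) by (auto simp: insert_commute)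
next
  assume "{(x2, y1), (x1, y2)} \<in> E"
  then show "{(x1, y1), (x2, y2)} \<in> partial_transpose E" unfolding partial_transpose_def by blast
qed

lemma pt_loopless: assumes "loopless E" shows "loopless (partial_transpose E)"
  unfolding loopless_def
proof
  fix e assume "e \<in> partial_transpose E"
  then obtain i j k l where h: "e = {(k, j), (i, l)}" "{(i, j), (k, l)} \<in> E"
    unfolding partial_transpose_def by blast
  then have "(i,j) \<noteq> (k,l)" using assms unfolding loopless_def by (metis doubleton_eq_iff)
  then have "(k,j) \<noteq> (i,l)" by auto
  then show "\<exists>u v. u \<noteq> v \<and> e = {u, v}" using h by blast
qed

lemma nbr_pt: "nbr (partial_transpose E) v = tnbr E v"
proof -
  obtain i j where v: "v = (i,j)" by fastforce
  show ?thesis unfolding v nbr_def tnbr_def using pt_mem[of i j]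
    by (auto simp: insert_commute)
qed

lemma degree_criterion_iff:
  assumes "grid_graph a b E"
  shows "degree_criterion a b E \<longleftrightarrow> (\<forall>v\<in>grid a b. card (nbr E v) = card (tnbr E v))"
  using degree_nbr[OF grid_graph_loopless[OF assms]]
    degree_nbr[OF pt_loopless[OF grid_graph_loopless[OF assms]]] nbr_pt
  unfolding degree_criterion_def by metis

lemma laplacian_nbr: assumes "loopless E"
  shows "laplacian E u v = (if u = v then of_nat (card (nbr E u)) else if {u, v} \<in> E then -1 else 0)"
  unfolding laplacian_def degree_nbr[OF assms] ..

lemma edge_grid: "grid_graph a b E \<Longrightarrow> {x, y} \<in> E \<Longrightarrow> x \<in> grid a b \<and> y \<in> grid a b"
proof -
  assume g: "grid_graph a b E" and e: "{x, y} \<in> E"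
  then obtain u v where "u \<in> grid a b" "v \<in> grid a b" "{x, y} = {u, v}"
    unfolding grid_graph_def by meson
  then show ?thesis by (auto simp: doubleton_eq_iff)
qed

lemma nbr_grid: "grid_graph a b E \<Longrightarrow> nbr E v \<subseteq> grid a b"
  unfolding nbr_def using edge_grid by blast

lemma tnbr_grid: assumes "grid_graph a b E" shows "tnbr E v \<subseteq> grid a b"
proof
  fix w assume "w \<in> tnbr E v"
  then obtain k l where w: "w = (k, l)" "{(fst v, l), (k, snd v)} \<in> E" unfolding tnbr_def by blast
  then have "(fst v, l) \<in> grid a b" "(k, snd v) \<in> grid a b" using edge_grid[OF assms] by blast+
  then show "w \<in> grid a b" using w unfolding grid_def by auto
qed

lemma finite_grid[simp]: "finite (grid a b)" unfolding grid_def by simp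

lemma lap_diff:
  assumes g: "grid_graph a b E" and Z: "Z \<subseteq> E"
  shows "laplacian E u v = laplacian (E - Z) u v + laplacian Z u v"
proof -
  have lE: "loopless E" using g by (rule grid_graph_loopless)
  have gZ1: "grid_graph a b Z" using grid_graph_subset[OF g Z] .
  have gZ2: "grid_graph a b (E - Z)" using grid_graph_subset[OF g Diff_subset] .
  have lZ1: "loopless Z" using gZ1 by (rule grid_graph_loopless)
  have lZ2: "loopless (E - Z)" using gZ2 by (rule grid_graph_loopless)
  have u1: "nbr E u = nbr (E - Z) u \<union> nbr Z u"
    using Z unfolding nbr_def by auto
  have u2: "nbr (E - Z) u \<inter> nbr Z u = {}"
    unfolding nbr_def by auto
  have f1: "finite (nbr (E - Z) u)" by (rule finite_subset[OF nbr_grid[OF gZ2] finite_grid])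
  have f2: "finite (nbr Z u)" by (rule finite_subset[OF nbr_grid[OF gZ1] finite_grid])
  have c: "card (nbr E u) = card (nbr (E - Z) u) + card (nbr Z u)"
    unfolding u1 using f1 f2 u2 by (rule card_Un_disjoint)
  show ?thesis
  proof (cases "u = v")
    case True
    then show ?thesis unfolding laplacian_nbr[OF lE] laplacian_nbr[OF lZ1] laplacian_nbr[OF lZ2]
      using c by simp
  next
    case False
    have "{u, v} \<in> E \<longleftrightarrow> {u, v} \<in> E - Z \<or> {u, v} \<in> Z" using Z by blast
    then show ?thesis using False unfolding laplacian_nbr[OF lE] laplacian_nbr[OF lZ1] laplacian_nbr[OF lZ2]
      by auto
  qed
qed

lemma psd_rowsum:
  assumes dm: "density_matrix n M" and z: "(\<Sum>i<n. \<Sum>j<n. M i j) = 0" and i: "i < n"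
  shows "(\<Sum>j<n. M i j) = 0"
proof -
  define r where "r i = (\<Sum>j<n. M i j)" for i
  define q where "q x = (\<Sum>i<n. \<Sum>j<n. cnj (x i) * M i j * x j)" for x
  define S where "S = (\<Sum>i<n. (cmod (r i))^2)"
  have herm: "\<And>i j. i < n \<Longrightarrow> j < n \<Longrightarrow> M j i = cnj (M i j)"
    and pos: "\<And>x. Im (q x) = 0 \<and> Re (q x) \<ge> 0" using dm unfolding density_matrix_def q_def by blast+
  have colsum: "(\<Sum>i<n. M i j) = cnj (r j)" if "j < n" for j
  proof -
    have "(\<Sum>i<n. M i j) = (\<Sum>i<n. cnj (M j i))"
    proof (rule sum.cong[OF refl])
      fix x assume "x \<in> {..<n}"
      then have "x < n" by simp
      from herm[OF that this] show "M x j = cnj (M j x)" .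
    qed
    then show ?thesis unfolding r_def by simp
  qed
  have S_c: "(\<Sum>i<n. cnj (r i) * r i) = of_real S"
  proof -
    have "cnj (r i) * r i = of_real ((cmod (r i))^2)" for i
      by (subst complex_norm_square) (simp add: mult.commute)
    then show ?thesis unfolding S_def of_real_sum by simp
  qed
  have key: "Re (q (\<lambda>i. 1 - of_real t * r i)) = - 2 * t * S + t^2 * Re (q r)" for t :: real
  proof -
    have e: "cnj (1 - of_real t * r i) * M i j * (1 - of_real t * r j)
       = M i j - of_real t * (M i j * r j) - of_real t * (cnj (r i) * M i j)
         + (of_real t)^2 * (cnj (r i) * M i j * r j)" for i j
      by (simp add: algebra_simps power2_eq_square)
    have t2: "(\<Sum>i<n. \<Sum>j<n. M i j * r j) = of_real S"
    proof -
      have "(\<Sum>i<n. \<Sum>j<n. M i j * r j) = (\<Sum>j<n. (\<Sum>i<n. M i j) * r j)"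
        by (subst sum.swap) (simp add: sum_distrib_right)
      also have "\<dots> = (\<Sum>j<n. cnj (r j) * r j)" by (simp add: colsum)
      finally show ?thesis using S_c by simp
    qed
    have t3: "(\<Sum>i<n. \<Sum>j<n. cnj (r i) * M i j) = of_real S"
      using S_c by (simp add: sum_distrib_left[symmetric] r_def)
    have "q (\<lambda>i. 1 - of_real t * r i) = (\<Sum>i<n. \<Sum>j<n. M i j)
        - of_real t * (\<Sum>i<n. \<Sum>j<n. M i j * r j)
        - of_real t * (\<Sum>i<n. \<Sum>j<n. cnj (r i) * M i j) + (of_real t)^2 * q r"
      unfolding q_def e
      by (simp add: sum.distrib sum_subtractf sum_distrib_left)
    then have "q (\<lambda>i. 1 - of_real t * r i) = (\<Sum>i<n. \<Sum>j<n. M i j) - of_real t * of_real S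
        - of_real t * of_real S + (of_real t)^2 * q r" unfolding t2 t3 .
    then show ?thesis using z by simp
  qed
  have S0: "S \<ge> 0" unfolding S_def by (simp add: sum_nonneg)
  have Q0: "Re (q r) \<ge> 0" using pos by blast
  have "S \<le> 0"
  proof (rule ccontr)
    assume "\<not> S \<le> 0"
    then have Sp: "S > 0" by simp
    define t where "t = S / (Re (q r) + 1)"
    have tp: "t > 0" unfolding t_def using Sp Q0 by simp
    have "0 \<le> - 2 * t * S + t^2 * Re (q r)" using pos key by metis
    then have "2 * t * S \<le> t * (t * Re (q r))" by (simp add: power2_eq_square algebra_simps)
    then have "2 * S \<le> t * Re (q r)" using tp by simp
    moreover have "t * Re (q r) \<le> S"
      unfolding t_def using Sp Q0 by (simp add: field_simps)
    ultimately show False using Sp by simp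
  qed
  then have "S = 0" using S0 by simp
  then have "\<forall>i\<in>{..<n}. (cmod (r i))^2 = 0"
    unfolding S_def by (subst sum_nonneg_eq_0_iff[symmetric]) auto
  then show ?thesis using i unfolding r_def by simp
qed

lemma sum_grid: "(\<Sum>i<a. \<Sum>j<b. f (i, j)) = (\<Sum>v\<in>grid a b. f v)"
  unfolding grid_def by (simp add: sum.cartesian_product lessThan_atLeast0)

lemma lap_rowsum:
  assumes g: "grid_graph a b E" and u: "u \<in> grid a b"
  shows "(\<Sum>v\<in>grid a b. laplacian E u v) = 0"
proof -
  have lE: "loopless E" using g by (rule grid_graph_loopless)
  have "(\<Sum>v\<in>grid a b. laplacian E u v) = laplacian E u u + (\<Sum>v\<in>grid a b - {u}. laplacian E u v)"
    using u by (simp add: sum.remove)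
  also have "(\<Sum>v\<in>grid a b - {u}. laplacian E u v) = (\<Sum>v\<in>grid a b - {u}. if v \<in> nbr E u then -1 else 0)"
  proof (rule sum.cong[OF refl])
    fix w assume w: "w \<in> grid a b - {u}"
    then show "laplacian E u w = (if w \<in> nbr E u then -1 else 0)"
      unfolding laplacian_nbr[OF lE] nbr_def by (simp add: eq_commute[of w u])
  qed
  also have "\<dots> = - of_nat (card (nbr E u))"
  proof -
    have "nbr E u \<subseteq> grid a b - {u}" using nbr_grid[OF g] unfolding nbr_def by blast
    then have "(grid a b - {u}) \<inter> nbr E u = nbr E u" by blast
    then show ?thesis by (simp add: sum.If_cases)
  qed
  finally show ?thesis by (simp add: laplacian_nbr[OF lE])
qed

lemma lap_tsum:
  assumes g: "grid_graph a b E" and ij: "(i, j) \<in> grid a b"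
  shows "(\<Sum>w\<in>grid a b. laplacian E (i, snd w) (fst w, j))
     = of_nat (card (nbr E (i, j))) - of_nat (card (tnbr E (i, j)))"
proof -
  have lE: "loopless E" using g by (rule grid_graph_loopless)
  have "(\<Sum>w\<in>grid a b. laplacian E (i, snd w) (fst w, j))
     = laplacian E (i, j) (i, j) + (\<Sum>w\<in>grid a b - {(i,j)}. laplacian E (i, snd w) (fst w, j))"
    using ij by (simp add: sum.remove)
  also have "(\<Sum>w\<in>grid a b - {(i,j)}. laplacian E (i, snd w) (fst w, j))
     = (\<Sum>w\<in>grid a b - {(i,j)}. if w \<in> tnbr E (i,j) then -1 else 0)"
  proof (rule sum.cong[OF refl])
    fix w assume w: "w \<in> grid a b - {(i,j)}"
    obtain k l where kl: "w = (k, l)" by fastforce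
    have ne: "(i, l) \<noteq> (k, j)" and ne2: "(k, l) \<noteq> (i, j)" using w kl by auto
    have "laplacian E (i, l) (k, j) = (if {(i, l), (k, j)} \<in> E then -1 else 0)"
      unfolding laplacian_nbr[OF lE] if_not_P[OF ne] ..
    moreover have "(k, l) \<in> tnbr E (i,j) \<longleftrightarrow> {(i, l), (k, j)} \<in> E"
      using ne2 unfolding tnbr_def by simp
    ultimately show "laplacian E (i, snd w) (fst w, j) = (if w \<in> tnbr E (i,j) then -1 else 0)"
      unfolding kl by simp
  qed
  also have "\<dots> = - of_nat (card (tnbr E (i,j)))"
  proof -
    have "tnbr E (i,j) \<subseteq> grid a b - {(i,j)}" using tnbr_grid[OF g] unfolding tnbr_def by blast
    then have "(grid a b - {(i,j)}) \<inter> tnbr E (i,j) = tnbr E (i,j)" by blast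
    then show ?thesis by (simp add: sum.If_cases)
  qed
  finally show ?thesis by (simp add: laplacian_nbr[OF lE])
qed

lemma density_one: "density_matrix n M \<Longrightarrow> Im (\<Sum>i<n. \<Sum>j<n. M i j) = 0 \<and> Re (\<Sum>i<n. \<Sum>j<n. M i j) \<ge> 0"
proof -
  assume "density_matrix n M"
  then have h: "\<forall>x :: nat \<Rightarrow> complex. Im (\<Sum>i<n. \<Sum>j<n. cnj (x i) * M i j * x j) = 0
                         \<and> Re (\<Sum>i<n. \<Sum>j<n. cnj (x i) * M i j * x j) \<ge> 0"
    unfolding density_matrix_def by (rule conjunct1[OF conjunct2])
  show ?thesis using spec[OF h, of "\<lambda>_. 1"] by simp
qed

lemma real_of_complex_cases: "Im z = 0 \<Longrightarrow> z = of_real (Re z)"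
  by (simp add: complex_eq_iff)

theorem necessity:
  assumes g: "grid_graph a b E" and ne: "E \<noteq> {}" and sep: "separable a b (rho E)"
  shows "degree_criterion a b E"
proof -
  obtain N :: nat and p :: "nat \<Rightarrow> real" and A B :: "nat \<Rightarrow> nat \<Rightarrow> nat \<Rightarrow> complex" where p0: "\<forall>t<N. p t \<ge> 0" and "sum p {..<N} = 1" and dm: "\<forall>t<N. density_matrix a (A t) \<and> density_matrix b (B t)"
    and dec: "\<forall>i<a. \<forall>j<b. \<forall>k<a. \<forall>l<b.
            rho E (i, j) (k, l) = (\<Sum>t<N. complex_of_real (p t) * A t i k * B t j l)"
    using sep unfolding separable_def by (elim exE conjE) (rule that; assumption)
  have fin: "finite E" using g by (rule grid_graph_finite)
  define m2 :: complex where "m2 = of_nat (2 * card E)"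
  have m2: "m2 \<noteq> 0" unfolding m2_def using fin ne by simp
  have rho_l: "rho E u v = laplacian E u v / m2" for u v unfolding rho_def m2_def ..
  define \<alpha> where "\<alpha> t = (\<Sum>i<a. \<Sum>k<a. A t i k)" for t
  define \<beta> where "\<beta> t = (\<Sum>l<b. \<Sum>j<b. B t l j)" for t
  have \<alpha>: "Im (\<alpha> t) = 0 \<and> Re (\<alpha> t) \<ge> 0" if "t < N" for t
    unfolding \<alpha>_def using density_one dm that by blast
  have \<beta>: "Im (\<beta> t) = 0 \<and> Re (\<beta> t) \<ge> 0" if "t < N" for t
    unfolding \<beta>_def using density_one dm that by blast
  have tot: "(\<Sum>i<a. \<Sum>l<b. \<Sum>k<a. \<Sum>j<b. rho E (i, l) (k, j)) = 0"
  proof -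
    have "(\<Sum>i<a. \<Sum>l<b. \<Sum>k<a. \<Sum>j<b. rho E (i, l) (k, j))
        = (\<Sum>u\<in>grid a b. \<Sum>v\<in>grid a b. rho E u v)"
      by (simp add: sum_grid[symmetric])
    also have "\<dots> = 0" unfolding rho_l using lap_rowsum[OF g]
      by (simp add: sum_divide_distrib[symmetric])
    finally show ?thesis .
  qed
  have tot2: "(\<Sum>i<a. \<Sum>l<b. \<Sum>k<a. \<Sum>j<b. rho E (i, l) (k, j))
      = (\<Sum>t<N. of_real (p t) * \<alpha> t * \<beta> t)"
  proof -
    have "(\<Sum>i<a. \<Sum>l<b. \<Sum>k<a. \<Sum>j<b. rho E (i, l) (k, j))
       = (\<Sum>i<a. \<Sum>l<b. \<Sum>k<a. \<Sum>j<b. \<Sum>t<N. complex_of_real (p t) * A t i k * B t l j)"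
      using dec by simp
    also have "\<dots> = (\<Sum>t<N. \<Sum>i<a. \<Sum>l<b. \<Sum>k<a. \<Sum>j<b. complex_of_real (p t) * A t i k * B t l j)"
      by (simp only: sum.swap[where A="{..<b}" and B="{..<N}"] sum.swap[where A="{..<a}" and B="{..<N}"])
    also have "\<dots> = (\<Sum>t<N. of_real (p t) * \<alpha> t * \<beta> t)"
    proof (rule sum.cong[OF refl])
      fix t
      have "of_real (p t) * \<alpha> t * \<beta> t = of_real (p t) * (\<alpha> t * \<beta> t)" by (simp add: mult.assoc)
      also have "\<alpha> t * \<beta> t = (\<Sum>i<a. \<Sum>l<b. (\<Sum>k<a. A t i k) * (\<Sum>j<b. B t l j))"
        unfolding \<alpha>_def \<beta>_def sum_product ..
      also have "\<dots> = (\<Sum>i<a. \<Sum>l<b. \<Sum>k<a. \<Sum>j<b. A t i k * B t l j)"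
        unfolding sum_product ..
      finally have "of_real (p t) * \<alpha> t * \<beta> t = (\<Sum>i<a. \<Sum>l<b. \<Sum>k<a. \<Sum>j<b. of_real (p t) * (A t i k * B t l j))"
        by (simp add: sum_distrib_left)
      then show "(\<Sum>i<a. \<Sum>l<b. \<Sum>k<a. \<Sum>j<b. complex_of_real (p t) * A t i k * B t l j)
          = of_real (p t) * \<alpha> t * \<beta> t" by (simp add: mult.assoc)
    qed
    finally show ?thesis .
  qed
  have treal: "of_real (p t) * \<alpha> t * \<beta> t = of_real (p t * Re (\<alpha> t) * Re (\<beta> t))" if "t < N" for t
    using \<alpha>[OF that] \<beta>[OF that] by (simp add: complex_eq_iff)
  have "(\<Sum>t<N. p t * Re (\<alpha> t) * Re (\<beta> t)) = 0"
  proof -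
    have "of_real (\<Sum>t<N. p t * Re (\<alpha> t) * Re (\<beta> t)) = (\<Sum>t<N. of_real (p t) * \<alpha> t * \<beta> t :: complex)"
      by (simp add: treal)
    then show ?thesis using tot tot2 of_real_eq_0_iff by metis
  qed
  moreover have "\<forall>t\<in>{..<N}. 0 \<le> p t * Re (\<alpha> t) * Re (\<beta> t)"
  proof
    fix t assume "t \<in> {..<N}"
    then have t: "t < N" by simp
    show "0 \<le> p t * Re (\<alpha> t) * Re (\<beta> t)"
      using p0 t \<alpha>[OF t] \<beta>[OF t] by (intro mult_nonneg_nonneg) simp_all
  qed
  ultimately have zt: "\<forall>t\<in>{..<N}. p t * Re (\<alpha> t) * Re (\<beta> t) = 0"
    using sum_nonneg_eq_0_iff[of "{..<N}" "\<lambda>t. p t * Re (\<alpha> t) * Re (\<beta> t)"] by simp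
  have each: "of_real (p t) * (\<Sum>k<a. A t i k) * (\<Sum>l<b. B t l j) = 0"
    if t: "t < N" and i: "i < a" and j: "j < b" for t i j
  proof -
    have dA: "density_matrix a (A t)" and dB: "density_matrix b (B t)" using dm t by simp_all
    have hB: "\<forall>i<b. \<forall>j<b. B t j i = cnj (B t i j)"
      using dB unfolding density_matrix_def by (rule conjunct1)
    have cases: "p t = 0 \<or> Re (\<alpha> t) = 0 \<or> Re (\<beta> t) = 0" using zt t by simp
    show ?thesis
    proof (cases "p t = 0")
      case True then show ?thesis by simp
    next
      case pF: False
      show ?thesis
      proof (cases "Re (\<alpha> t) = 0")
        case True
        then have "\<alpha> t = 0" using \<alpha>[OF t] by (simp add: complex_eq_iff)
        then have "(\<Sum>k<a. A t i k) = 0" using psd_rowsum[OF dA _ i] unfolding \<alpha>_def by simp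
        then show ?thesis by simp
      next
        case False
        then have "Re (\<beta> t) = 0" using cases pF by simp
        then have "\<beta> t = 0" using \<beta>[OF t] by (simp add: complex_eq_iff)
        then have r: "(\<Sum>l<b. B t j l) = 0" using psd_rowsum[OF dB _ j] unfolding \<beta>_def by simp
        have "(\<Sum>l<b. B t l j) = (\<Sum>l<b. cnj (B t j l))"
        proof (rule sum.cong[OF refl])
          fix l assume "l \<in> {..<b}"
          then have l: "l < b" by simp
          show "B t l j = cnj (B t j l)" using hB[rule_format, OF j l] .
        qed
        also have "\<dots> = cnj (\<Sum>l<b. B t j l)" by simp
        finally have "(\<Sum>l<b. B t l j) = 0" using r by simp
        then show ?thesis by simp
      qed
    qed
  qed
  have rowz: "(\<Sum>w\<in>grid a b. rho E (i, snd w) (fst w, j)) = 0" if "i < a" "j < b" for i j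
  proof -
    have "(\<Sum>w\<in>grid a b. rho E (i, snd w) (fst w, j)) = (\<Sum>k<a. \<Sum>l<b. rho E (i, l) (k, j))"
      by (simp add: sum_grid[symmetric])
    also have "\<dots> = (\<Sum>k<a. \<Sum>l<b. \<Sum>t<N. complex_of_real (p t) * A t i k * B t l j)"
    proof (rule sum.cong[OF refl], rule sum.cong[OF refl])
      fix k l assume "k \<in> {..<a}" "l \<in> {..<b}"
      then show "rho E (i, l) (k, j) = (\<Sum>t<N. complex_of_real (p t) * A t i k * B t l j)"
        using dec that by simp
    qed
    also have "\<dots> = (\<Sum>t<N. \<Sum>k<a. \<Sum>l<b. complex_of_real (p t) * A t i k * B t l j)"
      by (simp only: sum.swap[where A="{..<b}" and B="{..<N}"] sum.swap[where A="{..<a}" and B="{..<N}"])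
    also have "\<dots> = (\<Sum>t<N. of_real (p t) * (\<Sum>k<a. A t i k) * (\<Sum>l<b. B t l j))"
    proof (rule sum.cong[OF refl])
      fix t
      have sp: "(\<Sum>k<a. A t i k) * (\<Sum>l<b. B t l j) = (\<Sum>k<a. \<Sum>l<b. A t i k * B t l j)"
        by (rule sum_product)
      have "of_real (p t) * (\<Sum>k<a. A t i k) * (\<Sum>l<b. B t l j)
          = of_real (p t) * (\<Sum>k<a. \<Sum>l<b. A t i k * B t l j)"
        by (simp only: mult.assoc sp)
      then show "(\<Sum>k<a. \<Sum>l<b. complex_of_real (p t) * A t i k * B t l j)
          = of_real (p t) * (\<Sum>k<a. A t i k) * (\<Sum>l<b. B t l j)"
        by (simp add: sum_distrib_left mult.assoc)
    qed
    also have "\<dots> = 0" using each that by (intro sum.neutral ballI) simp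
    finally show ?thesis .
  qed
  show ?thesis unfolding degree_criterion_iff[OF g]
  proof
    fix v assume v: "v \<in> grid a b"
    obtain i j where ij: "v = (i, j)" by fastforce
    have ia: "i < a" "j < b" using v ij unfolding grid_def by auto
    have "(\<Sum>w\<in>grid a b. laplacian E (i, snd w) (fst w, j)) = 0"
      using rowz[OF ia] m2 unfolding rho_l by (simp add: sum_divide_distrib[symmetric])
    then show "card (nbr E v) = card (tnbr E v)" using lap_tsum[OF g] v ij by simp
  qed
qed

definition tm :: "real \<times> (nat \<Rightarrow> complex) \<times> (nat \<Rightarrow> complex) \<Rightarrow> vert \<Rightarrow> vert \<Rightarrow> complex" where
  "tm x p q = of_real (fst x) * fst (snd x) (fst p) * cnj (fst (snd x) (fst q))
      * snd (snd x) (snd p) * cnj (snd (snd x) (snd q))"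

definition cone :: "nat \<Rightarrow> nat \<Rightarrow> (vert \<Rightarrow> vert \<Rightarrow> complex) \<Rightarrow> bool" where
  "cone a b R \<longleftrightarrow> (\<exists>xs. (\<forall>x\<in>set xs. fst x \<ge> 0) \<and>
      (\<forall>p\<in>grid a b. \<forall>q\<in>grid a b. R p q = (\<Sum>x\<leftarrow>xs. tm x p q)))"

lemma cone_zero: "cone a b (\<lambda>p q. 0)"
  unfolding cone_def by (rule exI[of _ "[]"]) simp

lemma cone_add: assumes "cone a b R1" "cone a b R2" shows "cone a b (\<lambda>p q. R1 p q + R2 p q)"
proof -
  obtain xs where xs: "\<forall>x\<in>set xs. fst x \<ge> 0" "\<forall>p\<in>grid a b. \<forall>q\<in>grid a b. R1 p q = (\<Sum>x\<leftarrow>xs. tm x p q)"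
    using assms(1) unfolding cone_def by blast
  obtain ys where ys: "\<forall>x\<in>set ys. fst x \<ge> 0" "\<forall>p\<in>grid a b. \<forall>q\<in>grid a b. R2 p q = (\<Sum>x\<leftarrow>ys. tm x p q)"
    using assms(2) unfolding cone_def by blast
  show ?thesis unfolding cone_def
  proof (rule exI[of _ "xs @ ys"], intro conjI ballI)
    fix x assume "x \<in> set (xs @ ys)" then show "fst x \<ge> 0" using xs(1) ys(1) by auto
  next
    fix p q assume "p \<in> grid a b" "q \<in> grid a b"
    then show "R1 p q + R2 p q = (\<Sum>x\<leftarrow>xs @ ys. tm x p q)" using xs(2) ys(2) by simp
  qed
qed

lemma cone_single: "c \<ge> 0 \<Longrightarrow> cone a b (tm (c, u, w))"
  unfolding cone_def by (rule exI[of _ "[(c, u, w)]"]) simp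

lemma cone_cong: "cone a b R \<Longrightarrow> (\<And>p q. p \<in> grid a b \<Longrightarrow> q \<in> grid a b \<Longrightarrow> R' p q = R p q) \<Longrightarrow> cone a b R'"
  unfolding cone_def by simp

lemma cone_sum: fixes R :: "nat \<Rightarrow> vert \<Rightarrow> vert \<Rightarrow> complex" shows "(\<And>k. k < n \<Longrightarrow> cone a b (R k)) \<Longrightarrow> cone a b (\<lambda>p q. \<Sum>k<n. R k p q)"
proof (induct n)
  case 0 then show ?case by (simp add: cone_zero)
next
  case (Suc n)
  have "cone a b (\<lambda>p q. (\<Sum>k<n. R k p q) + R n p q)"
    using Suc by (intro cone_add) auto
  then show ?case by simp
qed

definition r1 :: "(nat \<Rightarrow> complex) \<Rightarrow> real \<Rightarrow> nat \<Rightarrow> nat \<Rightarrow> complex" where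
  "r1 u nu i k = u i * cnj (u k) / of_real nu"

lemma cnj_mult_self: "cnj z * z = of_real ((cmod z)^2)"
  by (subst complex_norm_square) (simp add: mult.commute)

lemma dm_rank1:
  assumes nu: "nu = (\<Sum>i<n. (cmod (u i))^2)" "nu > 0"
  shows "density_matrix n (r1 u nu)"
  unfolding density_matrix_def
proof (intro conjI allI impI)
  fix i j show "r1 u nu j i = cnj (r1 u nu i j)" unfolding r1_def by (simp add: mult.commute)
next
  fix x :: "nat \<Rightarrow> complex"
  define s where "s = (\<Sum>i<n. cnj (x i) * u i)"
  have "(\<Sum>i<n. \<Sum>j<n. cnj (x i) * r1 u nu i j * x j) = (\<Sum>i<n. \<Sum>j<n. (cnj (x i) * u i) * (cnj (u j) * x j)) / of_real nu"
    unfolding r1_def by (simp add: sum_divide_distrib mult_ac)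
  also have "\<dots> = s * cnj s / of_real nu"
    unfolding s_def sum_product[symmetric] by (simp add: mult_ac)
  also have "\<dots> = of_real ((cmod s)^2 / nu)"
    using complex_norm_square[of s] by (simp del: of_real_power)
  finally have q: "(\<Sum>i<n. \<Sum>j<n. cnj (x i) * r1 u nu i j * x j) = of_real ((cmod s)^2 / nu)" .
  show "Im (\<Sum>i<n. \<Sum>j<n. cnj (x i) * r1 u nu i j * x j) = 0" unfolding q by simp
  show "Re (\<Sum>i<n. \<Sum>j<n. cnj (x i) * r1 u nu i j * x j) \<ge> 0" unfolding q using nu by simp
next
  have "(\<Sum>i<n. r1 u nu i i) = (\<Sum>i<n. cnj (u i) * u i) / of_real nu"
    unfolding r1_def by (simp add: sum_divide_distrib mult.commute)
  also have "(\<Sum>i<n. cnj (u i) * u i) = of_real nu" unfolding cnj_mult_self nu(1) by (simp only: of_real_sum)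
  then have "(\<Sum>i<n. cnj (u i) * u i) / of_real nu = 1" using nu(2) by simp
  finally show "(\<Sum>i<n. r1 u nu i i) = 1" .
qed

lemma handshake:
  assumes g: "grid_graph a b E"
  shows "(\<Sum>v\<in>grid a b. card (nbr E v)) = 2 * card E"
proof -
  have lE: "loopless E" using g by (rule grid_graph_loopless)
  have fin: "finite E" using g by (rule grid_graph_finite)
  have "(\<Sum>v\<in>grid a b. card (nbr E v)) = (\<Sum>v\<in>grid a b. card {e\<in>E. v \<in> e})"
    using degree_nbr[OF lE] unfolding degree_def by simp
  also have "\<dots> = (\<Sum>v\<in>grid a b. \<Sum>e\<in>E. if v \<in> e then 1 else 0)"
    using fin by (simp add: sum.inter_filter[symmetric])
  also have "\<dots> = (\<Sum>e\<in>E. \<Sum>v\<in>grid a b. if v \<in> e then 1 else 0)"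
    by (rule sum.swap)
  also have "\<dots> = (\<Sum>e\<in>E. 2)"
  proof (rule sum.cong[OF refl])
    fix e assume e: "e \<in> E"
    then obtain x y where xy: "x \<noteq> y" "x \<in> grid a b" "y \<in> grid a b" "e = {x, y}"
      using g unfolding grid_graph_def by meson
    have "(\<Sum>v\<in>grid a b. if v \<in> e then 1 else 0) = card {v \<in> grid a b. v \<in> e}"
      by (simp add: sum.inter_filter[symmetric])
    also have "{v \<in> grid a b. v \<in> e} = {x, y}" using xy by auto
    finally show "(\<Sum>v\<in>grid a b. if v \<in> e then 1 else 0) = (2::nat)" using xy by simp
  qed
  finally show ?thesis by simp
qed

lemma sumsq_zero: fixes n :: nat and u :: "nat \<Rightarrow> complex" assumes "(\<Sum>i<n. (cmod (u i))^2) = 0" "i < n" shows "u i = 0"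
  using assms sum_nonneg_eq_0_iff[of "{..<n}" "\<lambda>i. (cmod (u i))^2"] by auto

lemma sumsq_nonneg: fixes u :: "nat \<Rightarrow> complex" shows "(\<Sum>i<n. (cmod (u i))^2) \<ge> 0"
  by (simp add: sum_nonneg)

lemma d0_norm: fixes n :: nat assumes "n > 0" shows "(\<Sum>i<n. (cmod (if i = 0 then (1::complex) else 0))^2) = 1"
proof -
  have "(\<Sum>i<n. (cmod (if i = 0 then (1::complex) else 0))^2) = (\<Sum>i<n. if i = 0 then 1 else 0)"
    by (rule sum.cong[OF refl]) simp
  also have "\<dots> = 1" using assms by (subst sum.delta) auto
  finally show ?thesis .
qed

lemma cone_sep:
  assumes g: "grid_graph a b E" and ne: "E \<noteq> {}" and cn: "cone a b (laplacian E)"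
  shows "separable a b (rho E)"
proof -
  obtain xs where xs0: "\<forall>x\<in>set xs. fst x \<ge> 0"
    and xsL: "\<forall>p\<in>grid a b. \<forall>q\<in>grid a b. laplacian E p q = (\<Sum>x\<leftarrow>xs. tm x p q)"
    using cn unfolding cone_def by blast
  have fin: "finite E" using g by (rule grid_graph_finite)
  define m2 :: real where "m2 = real (2 * card E)"
  have m2p: "m2 > 0" unfolding m2_def using fin ne by (simp add: card_gt_0_iff)
  obtain e where "e \<in> E" using ne by blast
  then obtain x y where "x \<in> grid a b" using g unfolding grid_graph_def by meson
  then have ab: "a > 0" "b > 0" unfolding grid_def by auto
  define N where "N = length xs"
  define cc where "cc t = fst (xs ! t)" for t
  define u where "u t = fst (snd (xs ! t))" for t
  define w where "w t = snd (snd (xs ! t))" for t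
  define nu where "nu t = (\<Sum>i<a. (cmod (u t i))^2)" for t
  define nw where "nw t = (\<Sum>j<b. (cmod (w t j))^2)" for t
  define d0 :: "nat \<Rightarrow> complex" where "d0 i = (if i = 0 then 1 else 0)" for i
  define A where "A t = (if nu t = 0 then r1 d0 1 else r1 (u t) (nu t))" for t
  define B where "B t = (if nw t = 0 then r1 d0 1 else r1 (w t) (nw t))" for t
  define p where "p t = cc t * nu t * nw t / m2" for t
  have cc0: "cc t \<ge> 0" if "t < N" for t
    using xs0 nth_mem[of t xs] that unfolding cc_def N_def by blast
  have nu0: "nu t \<ge> 0" "nw t \<ge> 0" for t unfolding nu_def nw_def by (simp_all add: sum_nonneg)
  have p0: "\<forall>t<N. p t \<ge> 0" unfolding p_def using cc0 nu0 m2p by simp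
  have dA: "density_matrix a (A t)" for t
  proof (cases "nu t = 0")
    case True
    have "density_matrix a (r1 d0 1)" using d0_norm[OF ab(1)] unfolding d0_def
      by (intro dm_rank1) simp_all
    then show ?thesis using True unfolding A_def by simp
  next
    case False
    then have "nu t > 0" using nu0 by (simp add: less_le)
    then show ?thesis using False unfolding A_def by (simp add: dm_rank1 nu_def)
  qed
  have dB: "density_matrix b (B t)" for t
  proof (cases "nw t = 0")
    case True
    have "density_matrix b (r1 d0 1)" using d0_norm[OF ab(2)] unfolding d0_def
      by (intro dm_rank1) simp_all
    then show ?thesis using True unfolding B_def by simp
  next
    case False
    then have "nw t > 0" using nu0 by (simp add: less_le)
    then show ?thesis using False unfolding B_def by (simp add: dm_rank1 nw_def)
  qed
  have hterm: "tm (xs ! t) (i, j) (k, l) / of_real m2 = of_real (p t) * A t i k * B t j l"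
    if "i < a" "j < b" "k < a" "l < b" for t i j k l
  proof -
    have tmx: "tm (xs ! t) (i, j) (k, l) = of_real (cc t) * u t i * cnj (u t k) * w t j * cnj (w t l)"
      unfolding tm_def cc_def u_def w_def by simp
    show ?thesis
    proof (cases "nu t = 0")
      case True
      then have "u t i = 0" using sumsq_zero[where n=a and u="u t" and i=i] that unfolding nu_def by simp
      then show ?thesis using True unfolding tmx p_def by simp
    next
      case F1: False
      show ?thesis
      proof (cases "nw t = 0")
        case True
        then have "w t j = 0" using sumsq_zero[where n=b and u="w t" and i=j] that unfolding nw_def by simp
        then show ?thesis using True unfolding tmx p_def by simp
      next
        case False
        have "of_real (nu t) \<noteq> (0::complex)" "of_real (nw t) \<noteq> (0::complex)" "of_real m2 \<noteq> (0::complex)"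
          using F1 False m2p by simp_all
        then show ?thesis using F1 False unfolding tmx p_def A_def B_def r1_def
          by (simp add: field_simps)
      qed
    qed
  qed
  have rho_eq: "rho E (i, j) (k, l) = (\<Sum>t<N. complex_of_real (p t) * A t i k * B t j l)"
    if "i < a" "j < b" "k < a" "l < b" for i j k l
  proof -
    have ij: "(i, j) \<in> grid a b" "(k, l) \<in> grid a b" using that unfolding grid_def by auto
    have "rho E (i, j) (k, l) = (\<Sum>x\<leftarrow>xs. tm x (i, j) (k, l)) / of_real m2"
      unfolding rho_def m2_def using xsL ij by simp
    also have "(\<Sum>x\<leftarrow>xs. tm x (i, j) (k, l)) = (\<Sum>t<N. tm (xs ! t) (i, j) (k, l))"
      unfolding N_def sum_list_sum_nth by (simp add: atLeast0LessThan)
    finally have "rho E (i, j) (k, l) = (\<Sum>t<N. tm (xs ! t) (i, j) (k, l) / of_real m2)"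
      by (simp add: sum_divide_distrib)
    also have "\<dots> = (\<Sum>t<N. complex_of_real (p t) * A t i k * B t j l)"
      using hterm that by simp
    finally show ?thesis .
  qed
  have trA: "(\<Sum>i<a. A t i i) = 1" for t using dA[of t] unfolding density_matrix_def by blast
  have trB: "(\<Sum>j<b. B t j j) = 1" for t using dB[of t] unfolding density_matrix_def by blast
  have "(\<Sum>i<a. \<Sum>j<b. rho E (i, j) (i, j)) = (\<Sum>i<a. \<Sum>j<b. \<Sum>t<N. complex_of_real (p t) * A t i i * B t j j)"
    using rho_eq by simp
  also have "\<dots> = (\<Sum>t<N. \<Sum>i<a. \<Sum>j<b. complex_of_real (p t) * A t i i * B t j j)"
    by (simp only: sum.swap[where A="{..<b}" and B="{..<N}"] sum.swap[where A="{..<a}" and B="{..<N}"])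
  also have "\<dots> = (\<Sum>t<N. complex_of_real (p t) * (\<Sum>i<a. A t i i) * (\<Sum>j<b. B t j j))"
  proof (rule sum.cong[OF refl])
    fix t
    have sp: "(\<Sum>i<a. A t i i) * (\<Sum>j<b. B t j j) = (\<Sum>i<a. \<Sum>j<b. A t i i * B t j j)"
      by (rule sum_product)
    show "(\<Sum>i<a. \<Sum>j<b. complex_of_real (p t) * A t i i * B t j j) =
       complex_of_real (p t) * (\<Sum>i<a. A t i i) * (\<Sum>j<b. B t j j)"
    proof -
      have "complex_of_real (p t) * (\<Sum>i<a. A t i i) * (\<Sum>j<b. B t j j)
          = complex_of_real (p t) * ((\<Sum>i<a. A t i i) * (\<Sum>j<b. B t j j))" by (rule mult.assoc)
      also have "\<dots> = (\<Sum>i<a. \<Sum>j<b. complex_of_real (p t) * (A t i i * B t j j))"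
        unfolding sp by (simp add: sum_distrib_left)
      finally show ?thesis by (simp add: mult.assoc)
    qed
  qed
  also have "\<dots> = of_real (\<Sum>t<N. p t)" using trA trB by simp
  finally have s1: "(\<Sum>i<a. \<Sum>j<b. rho E (i, j) (i, j)) = of_real (\<Sum>t<N. p t)" .
  have "(\<Sum>i<a. \<Sum>j<b. rho E (i, j) (i, j)) = (\<Sum>v\<in>grid a b. rho E v v)"
    by (rule sum_grid)
  also have "\<dots> = (\<Sum>v\<in>grid a b. of_nat (card (nbr E v))) / of_real m2"
    unfolding rho_def m2_def laplacian_nbr[OF grid_graph_loopless[OF g]] by (simp add: sum_divide_distrib)
  also have "(\<Sum>v\<in>grid a b. of_nat (card (nbr E v))) = (of_nat (2 * card E) :: complex)"
    using handshake[OF g] by (metis of_nat_sum)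
  also have "\<dots> / of_real m2 = 1" using m2p unfolding m2_def by simp
  finally have "of_real (\<Sum>t<N. p t) = (1::complex)" using s1 by simp
  then have psum: "(\<Sum>t<N. p t) = 1" by (metis of_real_eq_1_iff)
  show ?thesis unfolding separable_def
    using p0 psum dA dB rho_eq by blast
qed

lemma cone_prod:
  assumes "\<And>p. V p = u (fst p) * w (snd p)"
  shows "cone a b (\<lambda>p q. V p * cnj (V q))"
proof (rule cone_cong[OF cone_single[of 1 a b u w]])
  fix p q :: vert
  show "V p * cnj (V q) = tm (1, u, w) p q" unfolding tm_def assms by (simp add: mult_ac)
qed simp

lemma nbr_single:
  assumes "p0 \<noteq> q0"
  shows "nbr {{p0, q0}} p = (if p = p0 then {q0} else if p = q0 then {p0} else {})"
  using assms unfolding nbr_def by (auto simp: doubleton_eq_iff)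

lemma lap_edge:
  assumes ne: "p0 \<noteq> q0"
  shows "laplacian {{p0, q0}} p q =
     (if p = p0 then 1 else if p = q0 then -1 else 0) * cnj (if q = p0 then 1 else if q = q0 then -1 else 0)"
proof -
  have l: "loopless {{p0, q0}}" unfolding loopless_def using ne by blast
  show ?thesis unfolding laplacian_nbr[OF l] nbr_single[OF ne]
    using ne by (auto simp: doubleton_eq_iff)
qed

lemma cone_edge:
  assumes ne: "p0 \<noteq> q0" and nd: "fst p0 = fst q0 \<or> snd p0 = snd q0"
  shows "cone a b (laplacian {{p0, q0}})"
proof -
  define V where "V p = (if p = p0 then 1 else if p = q0 then -1 else (0::complex))" for p
  have lap: "laplacian {{p0, q0}} = (\<lambda>p q. V p * cnj (V q))"
    unfolding V_def by (intro ext) (rule lap_edge[OF ne])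
  obtain i j k l where pq: "p0 = (i, j)" "q0 = (k, l)" by fastforce
  show ?thesis unfolding lap
  proof (cases "i = k")
    case True
    then have jl: "j \<noteq> l" using ne pq by simp
    show "cone a b (\<lambda>p q. V p * cnj (V q))"
    proof (rule cone_prod)
      fix p :: vert
      obtain x y where p: "p = (x, y)" by fastforce
      show "V p = (\<lambda>x. if x = i then 1 else 0) (fst p) * (\<lambda>y. if y = j then 1 else if y = l then -1 else 0) (snd p)"
        unfolding V_def p pq using True jl by auto
    qed
  next
    case False
    then have jl: "j = l" using nd pq by simp
    show "cone a b (\<lambda>p q. V p * cnj (V q))"
    proof (rule cone_prod)
      fix p :: vert
      obtain x y where p: "p = (x, y)" by fastforce
      show "V p = (\<lambda>x. if x = i then 1 else if x = k then -1 else 0) (fst p) * (\<lambda>y. if y = j then 1 else 0) (snd p)"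
        unfolding V_def p pq using False jl by auto
    qed
  qed
qed

lemma find_cycle:
  fixes A :: "(nat \<times> nat) set"
  assumes fin: "finite A" and ne: "A \<noteq> {}"
    and bal: "\<And>j. card {l. (j, l) \<in> A} = card {l. (l, j) \<in> A}"
  shows "\<exists>L c. L > 0 \<and> (\<forall>n. c n = c (n mod L)) \<and> inj_on c {..<L} \<and> (\<forall>s. (c s, c (Suc s)) \<in> A)"
proof -
  have out: "\<exists>l. (j, l) \<in> A" if "(x, j) \<in> A" for x j
  proof -
    have "finite {l. (l, j) \<in> A}"
      by (rule finite_subset[of _ "fst ` A"]) (force, simp add: fin)
    moreover have "x \<in> {l. (l, j) \<in> A}" using that by simp
    ultimately have "card {l. (l, j) \<in> A} > 0" by (auto simp: card_gt_0_iff)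
    then have "card {l. (j, l) \<in> A} > 0" using bal by simp
    then have "{l. (j, l) \<in> A} \<noteq> {}" by (metis card.empty less_irrefl)
    then show ?thesis by blast
  qed
  obtain j0 j1 where j01: "(j0, j1) \<in> A" using ne by fastforce
  define w where "w = rec_nat j0 (\<lambda>n x. SOME l. (x, l) \<in> A)"
  have w0: "w 0 = j0" and wS: "w (Suc n) = (SOME l. (w n, l) \<in> A)" for n unfolding w_def by simp_all
  have arc: "(w n, w (Suc n)) \<in> A" for n
  proof (induct n)
    case 0 then show ?case unfolding wS w0 using j01 by (metis someI)
  next
    case (Suc n)
    then obtain l where "(w (Suc n), l) \<in> A" using out by blast
    then show ?case unfolding wS[of "Suc n"] by (metis someI)
  qed
  define S where "S = fst ` A"
  have finS: "finite S" unfolding S_def using fin by simp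
  have wS_in: "w n \<in> S" for n unfolding S_def using arc[of n] by force
  have "\<not> inj_on w {..card S}"
  proof
    assume "inj_on w {..card S}"
    moreover have "w ` {..card S} \<subseteq> S" using wS_in by auto
    ultimately have "card {..card S} \<le> card S" using finS by (metis card_inj_on_le)
    then show False by simp
  qed
  then obtain n m where nm: "n \<noteq> m" "w n = w m" unfolding inj_on_def by blast
  define P where "P m = (\<exists>n<m. w n = w m)" for m
  have "\<exists>m. P m" unfolding P_def using nm by (metis linorder_neqE_nat)
  define m0 where "m0 = (LEAST m. P m)"
  have Pm0: "P m0" unfolding m0_def using \<open>\<exists>m. P m\<close> by (metis LeastI_ex)
  then obtain n0 where n0: "n0 < m0" "w n0 = w m0" unfolding P_def by blast
  have minl: "\<not> P q" if "q < m0" for q using that unfolding m0_def by (metis not_less_Least)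
  have dist: "w p \<noteq> w q" if "p < q" "q < m0" for p q
    using minl[OF that(2)] that(1) unfolding P_def by metis
  define L where "L = m0 - n0"
  have Lp: "L > 0" unfolding L_def using n0 by simp
  define c where "c s = w (n0 + s mod L)" for s
  have per: "\<forall>n. c n = c (n mod L)" unfolding c_def by simp
  have inj: "inj_on c {..<L}"
  proof (rule inj_onI)
    fix s s' assume s: "s \<in> {..<L}" "s' \<in> {..<L}" "c s = c s'"
    then have e: "w (n0 + s) = w (n0 + s')" unfolding c_def by simp
    show "s = s'"
    proof (rule ccontr)
      assume "s \<noteq> s'"
      then have "n0 + s < n0 + s' \<or> n0 + s' < n0 + s" by auto
      moreover have "n0 + s < m0" "n0 + s' < m0" using s unfolding L_def by auto
      ultimately show False using dist e by metis
    qed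
  qed
  have arcs: "\<forall>s. (c s, c (Suc s)) \<in> A"
  proof
    fix s
    define r where "r = s mod L"
    have rL: "r < L" unfolding r_def using Lp by simp
    have cs: "c s = w (n0 + r)" unfolding c_def r_def ..
    have "c (Suc s) = w (Suc (n0 + r))"
    proof (cases "Suc r = L")
      case True
      then have "Suc s mod L = 0" unfolding r_def by (simp add: mod_Suc)
      then have "c (Suc s) = w n0" unfolding c_def by simp
      also have "\<dots> = w m0" by (rule n0(2))
      also have "m0 = Suc (n0 + r)" using True n0 unfolding L_def by simp
      finally show ?thesis .
    next
      case False
      then have "Suc s mod L = Suc r" unfolding r_def by (simp add: mod_Suc)
      then show ?thesis unfolding c_def by simp
    qed
    then show "(c s, c (Suc s)) \<in> A" using arc[of "n0 + r"] cs by simp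
  qed
  show ?thesis using Lp per inj arcs by blast
qed

lemma int_dvd_small: fixes d :: int assumes "int L dvd d" "\<bar>d\<bar> < int L" shows "d = 0"
proof (rule ccontr)
  assume "d \<noteq> 0"
  then have "\<bar>int L\<bar> \<le> \<bar>d\<bar>" using dvd_imp_le_int assms(1) by blast
  then show False using assms(2) by simp
qed

lemma A3: assumes "s < L" "s' < L" shows "(int L dvd (int s' - int s)) = (s' = s)"
proof
  assume "int L dvd (int s' - int s)"
  moreover have "\<bar>int s' - int s\<bar> < int L" using assms by simp
  ultimately have "int s' - int s = 0" by (rule int_dvd_small)
  then show "s' = s" by simp
qed simp

lemma A2: assumes "s < L" "s' < L" shows "(int L dvd (int s' - int s - 1)) = (s' = Suc s mod L)"
proof (cases "Suc s < L")
  case True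
  then have m: "Suc s mod L = Suc s" by simp
  show ?thesis unfolding m
  proof
    assume "int L dvd (int s' - int s - 1)"
    moreover have "\<bar>int s' - int s - 1\<bar> < int L" using assms True by simp
    ultimately have "int s' - int s - 1 = 0" by (rule int_dvd_small)
    then show "s' = Suc s" by simp
  qed simp
next
  case False
  then have sL: "Suc s = L" using assms by simp
  then have m: "Suc s mod L = 0" by simp
  have e: "int s' - int s - 1 = int s' - int L" using sL by simp
  have "(int L dvd (int s' - int L)) = (int L dvd int s')"
    using dvd_diff[of "int L" "int s'" "int L"] dvd_add[of "int L" "int s' - int L" "int L"] by auto
  also have "\<dots> = (int L dvd (int s' - int 0))" by simp
  also have "\<dots> = (s' = 0)" using A3[of 0 L s'] assms sL by simp
  finally show ?thesis unfolding e m .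
qed

lemma A1: assumes "r < L" "s < L" shows "(r = Suc s mod L) = (s = (r + L - 1) mod L)"
proof -
  have m: "(r + L - 1) mod L = (if r = 0 then L - 1 else r - 1)"
  proof (cases "r = 0")
    case True then show ?thesis using assms by simp
  next
    case False
    then have "r + L - 1 = (r - 1) + L" by simp
    then have "(r + L - 1) mod L = (r - 1) mod L" by simp
    also have "\<dots> = r - 1" using assms(1) by simp
    finally show ?thesis using False by simp
  qed
  show ?thesis
  proof (cases "Suc s < L")
    case True
    then have "Suc s mod L = Suc s" by simp
    then show ?thesis unfolding m using True by auto
  next
    case False
    then have sL: "Suc s = L" using assms by simp
    then have "Suc s mod L = 0" by simp
    then show ?thesis unfolding m using sL assms by auto
  qed
qed

lemma cis_k: "cis (2*pi*real k*of_int a/real L) * cis (2*pi*real k*of_int d/real L) = cis (2*pi*real k*of_int (a + d)/real L)"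
  unfolding cis_mult by (simp add: add_divide_distrib distrib_left)

lemma SUMk: assumes "L > 0"
  shows "(\<Sum>k<L. of_real (1/real L) * cis (2*pi*real k*of_int d/real L)) = (if int L dvd d then 1 else 0)"
  unfolding sum_distrib_left[symmetric] root_sum[OF assms] using assms by simp

locale cyc =
  fixes i :: nat and L :: nat and c :: "nat \<Rightarrow> nat"
  assumes Lpos: "L > 0" and per: "\<And>n. c n = c (n mod L)" and inj: "inj_on c {..<L}"
begin

definition C where "C = c ` {..<L}"
definition ind where "ind y = inv_into {..<L} c y"
definition Z where "Z = (\<lambda>s. {(i, c s), (Suc i, c (Suc s))}) ` {..<L}"
definition av :: "nat \<Rightarrow> nat \<Rightarrow> complex" where
  "av k x = (if x = i then 1 else if x = Suc i then - cis (2*pi*real k/real L) else 0)"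
definition gv :: "nat \<Rightarrow> nat \<Rightarrow> complex" where
  "gv k y = (if y \<in> C then cis (- (2*pi*real k*real (ind y)/real L)) else 0)"

lemma indC: "y \<in> C \<Longrightarrow> ind y < L \<and> c (ind y) = y"
  unfolding C_def ind_def using inv_into_into[of y c "{..<L}"] f_inv_into_f[of y c "{..<L}"] by auto

lemma ind_c: "s < L \<Longrightarrow> ind (c s) = s"
  unfolding ind_def using inj by (simp add: inv_into_f_f)

lemma cC: "c n \<in> C"
  unfolding C_def using per[of n] Lpos by (metis image_eqI lessThan_iff mod_less_divisor)

lemma ind_eq: assumes "r < L" shows "(y \<in> C \<and> ind y = r) = (y = c r)"
proof
  assume h: "y \<in> C \<and> ind y = r" then show "y = c r" using indC[of y] by auto
next
  assume "y = c r" then show "y \<in> C \<and> ind y = r" using cC ind_c assms by simp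
qed

lemma memZ: "{(x, y), (x', y')} \<in> Z \<longleftrightarrow>
   (x = i \<and> x' = Suc i \<and> y \<in> C \<and> y' \<in> C \<and> ind y' = Suc (ind y) mod L) \<or>
   (x = Suc i \<and> x' = i \<and> y \<in> C \<and> y' \<in> C \<and> ind y = Suc (ind y') mod L)"
proof
  assume "{(x, y), (x', y')} \<in> Z"
  then obtain s where s: "s < L" "{(x, y), (x', y')} = {(i, c s), (Suc i, c (Suc s))}"
    unfolding Z_def by blast
  have sm: "Suc s mod L < L" using Lpos by simp
  have cs: "c (Suc s) = c (Suc s mod L)" by (rule per)
  from s(2) have "((x, y) = (i, c s) \<and> (x', y') = (Suc i, c (Suc s))) \<or>
     ((x, y) = (Suc i, c (Suc s)) \<and> (x', y') = (i, c s))" by (simp add: doubleton_eq_iff)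
  then show "(x = i \<and> x' = Suc i \<and> y \<in> C \<and> y' \<in> C \<and> ind y' = Suc (ind y) mod L) \<or>
   (x = Suc i \<and> x' = i \<and> y \<in> C \<and> y' \<in> C \<and> ind y = Suc (ind y') mod L)"
  proof
    assume h: "(x, y) = (i, c s) \<and> (x', y') = (Suc i, c (Suc s))"
    then have "ind y = s" "ind y' = Suc s mod L" using ind_c s(1) sm cs by auto
    then show ?thesis using h cC by auto
  next
    assume h: "(x, y) = (Suc i, c (Suc s)) \<and> (x', y') = (i, c s)"
    then have "ind y' = s" "ind y = Suc s mod L" using ind_c s(1) sm cs by auto
    then show ?thesis using h cC by auto
  qed
next
  assume "(x = i \<and> x' = Suc i \<and> y \<in> C \<and> y' \<in> C \<and> ind y' = Suc (ind y) mod L) \<or>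
   (x = Suc i \<and> x' = i \<and> y \<in> C \<and> y' \<in> C \<and> ind y = Suc (ind y') mod L)"
  then show "{(x, y), (x', y')} \<in> Z"
  proof
    assume h: "x = i \<and> x' = Suc i \<and> y \<in> C \<and> y' \<in> C \<and> ind y' = Suc (ind y) mod L"
    define s where "s = ind y"
    have s: "s < L" "c s = y" using indC h unfolding s_def by auto
    have "y' = c (Suc s mod L)" using indC h unfolding s_def by metis
    then have "y' = c (Suc s)" using per by metis
    then have "{(x, y), (x', y')} = {(i, c s), (Suc i, c (Suc s))}" using h s by simp
    then show ?thesis unfolding Z_def using s(1) by blast
  next
    assume h: "x = Suc i \<and> x' = i \<and> y \<in> C \<and> y' \<in> C \<and> ind y = Suc (ind y') mod L"
    define s where "s = ind y'"
    have s: "s < L" "c s = y'" using indC h unfolding s_def by auto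
    have "y = c (Suc s mod L)" using indC h unfolding s_def by metis
    then have "y = c (Suc s)" using per by metis
    then have "{(x, y), (x', y')} = {(i, c s), (Suc i, c (Suc s))}" using h s by (simp add: insert_commute)
    then show ?thesis unfolding Z_def using s(1) by blast
  qed
qed

lemma Z_loopless: "loopless Z"
  unfolding loopless_def
proof
  fix e assume "e \<in> Z"
  then obtain s where "e = {(i, c s), (Suc i, c (Suc s))}" unfolding Z_def by blast
  moreover have "(i, c s) \<noteq> (Suc i, c (Suc s))" by simp
  ultimately show "\<exists>u v. u \<noteq> v \<and> e = {u, v}" by blast
qed

lemma pred_lt: "(r + L - 1) mod L < L" using Lpos by simp
lemma suc_lt: "Suc r mod L < L" using Lpos by simp

lemma nbr_i: assumes "y \<in> C" shows "nbr Z (i, y) = {(Suc i, c (Suc (ind y) mod L))}"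
proof -
  have "w \<in> nbr Z (i, y) \<longleftrightarrow> w = (Suc i, c (Suc (ind y) mod L))" for w
  proof -
    obtain x' y' where w: "w = (x', y')" by fastforce
    have "w \<in> nbr Z (i, y) \<longleftrightarrow> x' = Suc i \<and> y' \<in> C \<and> ind y' = Suc (ind y) mod L"
      unfolding nbr_def w using memZ[of i y x' y'] assms by auto
    also have "\<dots> \<longleftrightarrow> x' = Suc i \<and> y' = c (Suc (ind y) mod L)" using ind_eq[OF suc_lt] by blast
    finally show ?thesis unfolding w by simp
  qed
  then show ?thesis by blast
qed

lemma nbr_Si: assumes "y \<in> C" shows "nbr Z (Suc i, y) = {(i, c ((ind y + L - 1) mod L))}"
proof -
  have "w \<in> nbr Z (Suc i, y) \<longleftrightarrow> w = (i, c ((ind y + L - 1) mod L))" for w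
  proof -
    obtain x' y' where w: "w = (x', y')" by fastforce
    have "w \<in> nbr Z (Suc i, y) \<longleftrightarrow> x' = i \<and> y' \<in> C \<and> ind y = Suc (ind y') mod L"
      unfolding nbr_def w using memZ[of "Suc i" y x' y'] assms by auto
    also have "\<dots> \<longleftrightarrow> x' = i \<and> y' \<in> C \<and> ind y' = (ind y + L - 1) mod L"
      using A1[of "ind y" L] indC assms by blast
    also have "\<dots> \<longleftrightarrow> x' = i \<and> y' = c ((ind y + L - 1) mod L)" using ind_eq[OF pred_lt] by blast
    finally show ?thesis unfolding w by simp
  qed
  then show ?thesis by blast
qed

lemma nbr_o: assumes "\<not> ((x = i \<or> x = Suc i) \<and> y \<in> C)" shows "nbr Z (x, y) = {}"
  unfolding nbr_def using memZ assms by auto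

lemma tnbr_i: assumes "y \<in> C" shows "tnbr Z (i, y) = {(Suc i, c ((ind y + L - 1) mod L))}"
proof -
  have "w \<in> tnbr Z (i, y) \<longleftrightarrow> w = (Suc i, c ((ind y + L - 1) mod L))" for w
  proof -
    obtain k l where w: "w = (k, l)" by fastforce
    have "w \<in> tnbr Z (i, y) \<longleftrightarrow> k = Suc i \<and> l \<in> C \<and> ind y = Suc (ind l) mod L"
      unfolding tnbr_def w using memZ[of i l k y] assms by auto
    also have "\<dots> \<longleftrightarrow> k = Suc i \<and> l \<in> C \<and> ind l = (ind y + L - 1) mod L"
      using A1[of "ind y" L] indC assms by blast
    also have "\<dots> \<longleftrightarrow> k = Suc i \<and> l = c ((ind y + L - 1) mod L)" using ind_eq[OF pred_lt] by blast
    finally show ?thesis unfolding w by simp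
  qed
  then show ?thesis by blast
qed

lemma tnbr_Si: assumes "y \<in> C" shows "tnbr Z (Suc i, y) = {(i, c (Suc (ind y) mod L))}"
proof -
  have "w \<in> tnbr Z (Suc i, y) \<longleftrightarrow> w = (i, c (Suc (ind y) mod L))" for w
  proof -
    obtain k l where w: "w = (k, l)" by fastforce
    have "w \<in> tnbr Z (Suc i, y) \<longleftrightarrow> k = i \<and> l \<in> C \<and> ind l = Suc (ind y) mod L"
      unfolding tnbr_def w using memZ[of "Suc i" l k y] assms by auto
    also have "\<dots> \<longleftrightarrow> k = i \<and> l = c (Suc (ind y) mod L)" using ind_eq[OF suc_lt] by blast
    finally show ?thesis unfolding w by simp
  qed
  then show ?thesis by blast
qed

lemma tnbr_o: assumes "\<not> ((x = i \<or> x = Suc i) \<and> y \<in> C)" shows "tnbr Z (x, y) = {}"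
  unfolding tnbr_def using memZ assms by auto

lemma card_nbr: "card (nbr Z (x, y)) = (if (x = i \<or> x = Suc i) \<and> y \<in> C then 1 else 0)"
  using nbr_i nbr_Si nbr_o by (cases "x = i") auto

lemma card_tnbr: "card (tnbr Z (x, y)) = (if (x = i \<or> x = Suc i) \<and> y \<in> C then 1 else 0)"
  using tnbr_i tnbr_Si tnbr_o by (cases "x = i") auto

end

lemma sum_neg_form: assumes "L > 0"
  shows "(\<Sum>k<L. of_real (1/real L) * (- cis (2*pi*real k*of_int a/real L)) * cis (2*pi*real k*of_int d/real L))
     = - (if int L dvd (a + d) then 1 else 0)"
proof -
  have "(\<Sum>k<L. of_real (1/real L) * (- cis (2*pi*real k*of_int a/real L)) * cis (2*pi*real k*of_int d/real L))
     = (\<Sum>k<L. - (of_real (1/real L) * cis (2*pi*real k*of_int (a + d)/real L)))"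
  proof (rule sum.cong[OF refl])
    fix k
    have e: "\<And>(z::complex) X Y. z * (- X) * Y = - (z * (X * Y))" by simp
    show "of_real (1/real L) * (- cis (2*pi*real k*of_int a/real L)) * cis (2*pi*real k*of_int d/real L)
      = - (of_real (1/real L) * cis (2*pi*real k*of_int (a + d)/real L))"
      unfolding e cis_k ..
  qed
  also have "\<dots> = - (\<Sum>k<L. of_real (1/real L) * cis (2*pi*real k*of_int (a + d)/real L))"
    by (simp add: sum_negf)
  finally show ?thesis using SUMk[OF assms, of "a + d"] by simp
qed

lemma sum_pos_form: assumes "L > 0"
  shows "(\<Sum>k<L. of_real (1/real L) * 1 * cis (2*pi*real k*of_int d/real L)) = (if int L dvd d then 1 else 0)"
  using SUMk[OF assms, of d] by simp

context cyc begin

lemma gv_prod: assumes "y \<in> C" "y' \<in> C"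
  shows "gv k y * cnj (gv k y') = cis (2*pi*real k*of_int (int (ind y') - int (ind y))/real L)"
proof -
  have "gv k y * cnj (gv k y') = cis (-(2*pi*real k*real (ind y)/real L)) * cis (2*pi*real k*real (ind y')/real L)"
    using assms unfolding gv_def by (simp add: cis_cnj)
  also have "\<dots> = cis (2*pi*real k*of_int (int (ind y') - int (ind y))/real L)"
    unfolding cis_mult by (rule arg_cong[where f = cis]) (simp add: of_int_diff right_diff_distrib diff_divide_distrib)
  finally show ?thesis .
qed

lemma avii: "av k i * cnj (av k i) = 1" unfolding av_def by simp
lemma avss: "av k (Suc i) * cnj (av k (Suc i)) = 1"
  unfolding av_def by (simp add: cis_cnj cis_mult)
lemma avis: "av k i * cnj (av k (Suc i)) = - cis (2*pi*real k*of_int (-1)/real L)"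
  unfolding av_def by (simp add: cis_cnj)
lemma avsi: "av k (Suc i) * cnj (av k i) = - cis (2*pi*real k*of_int 1/real L)"
  unfolding av_def by simp
lemma av_o: "x \<noteq> i \<Longrightarrow> x \<noteq> Suc i \<Longrightarrow> av k x = 0" unfolding av_def by simp
lemma gv_o: "y \<notin> C \<Longrightarrow> gv k y = 0" unfolding gv_def by simp

lemma tm_exp: "tm (1/real L, av k, gv k) (x, y) (x', y')
   = of_real (1/real L) * (av k x * cnj (av k x')) * (gv k y * cnj (gv k y'))"
  unfolding tm_def by (simp add: mult_ac)

lemma lapZ: "laplacian Z p q = (\<Sum>k<L. tm (1/real L, av k, gv k) p q)"
proof -
  obtain x y where p: "p = (x, y)" by fastforce
  obtain x' y' where q: "q = (x', y')" by fastforce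
  have lap: "laplacian Z (x, y) (x', y') = (if (x, y) = (x', y') then (if (x = i \<or> x = Suc i) \<and> y \<in> C then 1 else 0)
      else if {(x, y), (x', y')} \<in> Z then -1 else 0)"
    unfolding laplacian_nbr[OF Z_loopless] card_nbr by simp
  show ?thesis unfolding p q
  proof (cases "(x = i \<or> x = Suc i) \<and> y \<in> C")
    case F: False
    have "tm (1/real L, av k, gv k) (x, y) (x', y') = 0" for k
      unfolding tm_exp using F av_o gv_o by auto
    moreover have "laplacian Z (x, y) (x', y') = 0" unfolding lap using F memZ[of x y x' y'] by auto
    ultimately show "laplacian Z (x, y) (x', y') = (\<Sum>k<L. tm (1/real L, av k, gv k) (x, y) (x', y'))" by simp
  next
    case T: True
    show "laplacian Z (x, y) (x', y') = (\<Sum>k<L. tm (1/real L, av k, gv k) (x, y) (x', y'))"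
    proof (cases "(x' = i \<or> x' = Suc i) \<and> y' \<in> C")
      case F: False
      have "tm (1/real L, av k, gv k) (x, y) (x', y') = 0" for k
        unfolding tm_exp using F av_o gv_o by auto
      moreover have "laplacian Z (x, y) (x', y') = 0" unfolding lap using T F memZ[of x y x' y'] by auto
      ultimately show ?thesis by simp
    next
      case T': True
      define s where "s = ind y"
      define s' where "s' = ind y'"
      have sL: "s < L" "s' < L" "c s = y" "c s' = y'" using indC T T' unfolding s_def s'_def by auto
      have yy: "(y = y') = (s' = s)" using sL inj unfolding inj_on_def by auto
      have g: "gv k y * cnj (gv k y') = cis (2*pi*real k*of_int (int s' - int s)/real L)" for k
        using gv_prod T T' unfolding s_def s'_def by blast
      have i1: "i \<noteq> Suc i" by simp
      show ?thesis
      proof (cases "x = i")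
        case xi: True
        show ?thesis
        proof (cases "x' = i")
          case True
          have "(\<Sum>k<L. tm (1/real L, av k, gv k) (x, y) (x', y'))
              = (\<Sum>k<L. of_real (1/real L) * 1 * cis (2*pi*real k*of_int (int s' - int s)/real L))"
            unfolding tm_exp g xi True avii ..
          also have "\<dots> = (if s' = s then 1 else 0)" unfolding sum_pos_form[OF Lpos] A3[OF sL(1,2)] ..
          finally show ?thesis unfolding lap using xi True T memZ[of x y x' y'] yy by auto
        next
          case False
          then have xs: "x' = Suc i" using T' by simp
          have "(\<Sum>k<L. tm (1/real L, av k, gv k) (x, y) (x', y'))
              = (\<Sum>k<L. of_real (1/real L) * (- cis (2*pi*real k*of_int (-1)/real L)) * cis (2*pi*real k*of_int (int s' - int s)/real L))"
            unfolding tm_exp g xi xs avis ..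
          also have "\<dots> = - (if int L dvd (-1 + (int s' - int s)) then 1 else 0)"
            by (rule sum_neg_form[OF Lpos])
          also have "(int L dvd (-1 + (int s' - int s))) = (s' = Suc s mod L)"
            using A2[OF sL(1,2)] by (simp add: algebra_simps)
          finally show ?thesis unfolding lap using xi xs T T' memZ[of x y x' y'] unfolding s_def s'_def by auto
        qed
      next
        case xn: False
        then have xs: "x = Suc i" using T by simp
        show ?thesis
        proof (cases "x' = i")
          case True
          have "(\<Sum>k<L. tm (1/real L, av k, gv k) (x, y) (x', y'))
              = (\<Sum>k<L. of_real (1/real L) * (- cis (2*pi*real k*of_int 1/real L)) * cis (2*pi*real k*of_int (int s' - int s)/real L))"
            unfolding tm_exp g xs True avsi ..
          also have "\<dots> = - (if int L dvd (1 + (int s' - int s)) then 1 else 0)"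
            by (rule sum_neg_form[OF Lpos])
          also have "(int L dvd (1 + (int s' - int s))) = (int L dvd (int s - int s' - 1))"
            using dvd_minus_iff[of "int L" "int s - int s' - 1"] by (simp add: algebra_simps)
          also have "\<dots> = (s = Suc s' mod L)" using A2[OF sL(2,1)] .
          finally show ?thesis unfolding lap using xs True T T' memZ[of x y x' y'] unfolding s_def s'_def by auto
        next
          case False
          then have xs': "x' = Suc i" using T' by simp
          have "(\<Sum>k<L. tm (1/real L, av k, gv k) (x, y) (x', y'))
              = (\<Sum>k<L. of_real (1/real L) * 1 * cis (2*pi*real k*of_int (int s' - int s)/real L))"
            unfolding tm_exp g xs xs' avss ..
          also have "\<dots> = (if s' = s then 1 else 0)" unfolding sum_pos_form[OF Lpos] A3[OF sL(1,2)] ..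
          finally show ?thesis unfolding lap using xs xs' T memZ[of x y x' y'] yy by auto
        qed
      qed
    qed
  qed
qed

lemma cone_Z: "cone a b (laplacian Z)"
proof -
  have "cone a b (\<lambda>p q. \<Sum>k<L. tm (1/real L, av k, gv k) p q)"
    by (rule cone_sum) (rule cone_single, simp)
  moreover have "laplacian Z = (\<lambda>p q. \<Sum>k<L. tm (1/real L, av k, gv k) p q)"
    by (intro ext) (rule lapZ)
  ultimately show ?thesis by simp
qed

end

definition crit :: "nat \<Rightarrow> nat \<Rightarrow> vert set set \<Rightarrow> bool" where
  "crit a b E \<longleftrightarrow> (\<forall>v\<in>grid a b. card (nbr E v) = card (tnbr E v))"

lemma crit_diff:
  assumes g: "grid_graph a b E" and Z: "Z \<subseteq> E" and cz: "\<And>v. card (nbr Z v) = card (tnbr Z v)"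
    and cr: "crit a b E"
  shows "crit a b (E - Z)"
  unfolding crit_def
proof
  fix v assume v: "v \<in> grid a b"
  have gZ: "grid_graph a b Z" using grid_graph_subset[OF g Z] .
  have n1: "nbr (E - Z) v = nbr E v - nbr Z v" unfolding nbr_def by blast
  have n2: "tnbr (E - Z) v = tnbr E v - tnbr Z v" unfolding tnbr_def by blast
  have s1: "nbr Z v \<subseteq> nbr E v" using Z unfolding nbr_def by blast
  have s2: "tnbr Z v \<subseteq> tnbr E v" using Z unfolding tnbr_def by blast
  have f1: "finite (nbr Z v)" by (rule finite_subset[OF nbr_grid[OF gZ] finite_grid])
  have f2: "finite (tnbr Z v)" by (rule finite_subset[OF tnbr_grid[OF gZ] finite_grid])
  have "card (nbr (E - Z) v) = card (nbr E v) - card (nbr Z v)"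
    unfolding n1 by (rule card_Diff_subset[OF f1 s1])
  also have "\<dots> = card (tnbr E v) - card (tnbr Z v)" using cr v cz unfolding crit_def by simp
  also have "\<dots> = card (tnbr (E - Z) v)" unfolding n2 by (rule card_Diff_subset[OF f2 s2, symmetric])
  finally show "card (nbr (E - Z) v) = card (tnbr (E - Z) v)" .
qed

lemma tnbr_single_nd:
  assumes ne: "p0 \<noteq> q0" and nd: "fst p0 = fst q0 \<or> snd p0 = snd q0"
  shows "card (nbr {{p0, q0}} v) = card (tnbr {{p0, q0}} v)"
proof -
  obtain i j k l where pq: "p0 = (i, j)" "q0 = (k, l)" by fastforce
  obtain x y where v: "v = (x, y)" by fastforce
  have "nbr {{p0, q0}} v = tnbr {{p0, q0}} v"
  proof (cases "i = k")
    case True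
    then show ?thesis unfolding pq v nbr_def tnbr_def using ne pq
      by (auto simp: doubleton_eq_iff)
  next
    case False
    then have "j = l" using nd pq by simp
    then show ?thesis unfolding pq v nbr_def tnbr_def using ne pq False
      by (auto simp: doubleton_eq_iff)
  qed
  then show ?thesis by simp
qed

lemma lap_empty: "laplacian {} p q = 0"
  unfolding laplacian_def degree_def by simp

lemma suff_row:
  assumes "grid_graph a b E" "row_stratified E" "crit a b E"
  shows "cone a b (laplacian E)"
  using assms
proof (induction "card E" arbitrary: E rule: less_induct)
  case less
  have g: "grid_graph a b E" and rs: "row_stratified E" and cr: "crit a b E" using less.prems by auto
  have fin: "finite E" using g by (rule grid_graph_finite)
  have rs_sub: "row_stratified F" if "F \<subseteq> E" for F using rs that unfolding row_stratified_def by blast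
  show ?case
  proof (cases "E = {}")
    case True
    show ?thesis by (rule cone_cong[OF cone_zero]) (simp add: True lap_empty)
  next
    case ne: False
    show ?thesis
    proof (cases "\<exists>p0 q0. {p0, q0} \<in> E \<and> p0 \<noteq> q0 \<and> (fst p0 = fst q0 \<or> snd p0 = snd q0)")
      case True
      then obtain p0 q0 where e: "{p0, q0} \<in> E" "p0 \<noteq> q0" "fst p0 = fst q0 \<or> snd p0 = snd q0" by blast
      define E' where "E' = E - {{p0, q0}}"
      have lt: "card E' < card E" unfolding E'_def using fin e(1) by (rule card_Diff1_less)
      have sub: "{{p0, q0}} \<subseteq> E" using e(1) by simp
      have g': "grid_graph a b E'" unfolding E'_def using grid_graph_subset[OF g] by blast
      have rs': "row_stratified E'" unfolding E'_def by (rule rs_sub) blast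
      have cr': "crit a b E'" unfolding E'_def
        by (rule crit_diff[OF g sub _ cr]) (rule tnbr_single_nd[OF e(2,3)])
      have c1: "cone a b (laplacian E')" using less.hyps[OF lt g' rs' cr'] .
      have c2: "cone a b (laplacian {{p0, q0}})" by (rule cone_edge[OF e(2,3)])
      show ?thesis
      proof (rule cone_cong[OF cone_add[OF c1 c2]])
        fix p q show "laplacian E p q = laplacian E' p q + laplacian {{p0, q0}} p q"
          unfolding E'_def by (rule lap_diff[OF g sub])
      qed
    next
      case False
      have diag: "x \<noteq> x' \<and> y \<noteq> y'" if "{(x, y), (x', y')} \<in> E" "(x, y) \<noteq> (x', y')" for x y x' y'
        using False that by fastforce
      have rs1: "x' = Suc x \<or> x = Suc x'" if "{(x, y), (x', y')} \<in> E" "x \<noteq> x'" "y \<noteq> y'" for x y x' y'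
      proof -
        have "\<bar>int x - int x'\<bar> = 1" using rs that unfolding row_stratified_def by blast
        then show ?thesis by linarith
      qed
      define P where "P i = (\<exists>j l. {(i, j), (Suc i, l)} \<in> E)" for i
      have exP: "\<exists>i. P i"
      proof -
        obtain e where e: "e \<in> E" using ne by blast
        then obtain p q where pq: "p \<noteq> q" "e = {p, q}" using g unfolding grid_graph_def by meson
        obtain x y x' y' where xy: "p = (x, y)" "q = (x', y')" by fastforce
        have eE: "{(x, y), (x', y')} \<in> E" using e pq xy by simp
        have d: "x \<noteq> x'" "y \<noteq> y'" using diag[OF eE] pq xy by auto
        show ?thesis
        proof (cases "x' = Suc x")
          case True then show ?thesis unfolding P_def using eE by blast
        next
          case False
          then have "x = Suc x'" using rs1[OF eE d] by simp
          then have "{(x', y'), (Suc x', y)} \<in> E" using eE by (simp add: insert_commute)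
          then show ?thesis unfolding P_def by blast
        qed
      qed
      define i0 where "i0 = (LEAST i. P i)"
      have Pi0: "P i0" unfolding i0_def using exP by (metis LeastI_ex)
      have minP: "\<not> P i" if "i < i0" for i using that unfolding i0_def by (metis not_less_Least)
      define A where "A = {(j, l). {(i0, j), (Suc i0, l)} \<in> E}"
      have Agrid: "j < b \<and> l < b" if "(j, l) \<in> A" for j l
      proof -
        have "{(i0, j), (Suc i0, l)} \<in> E" using that unfolding A_def by simp
        from edge_grid[OF g this] show ?thesis unfolding grid_def by simp
      qed
      have finA: "finite A"
        by (rule finite_subset[of _ "{..<b} \<times> {..<b}"]) (use Agrid in auto)
      have neA: "A \<noteq> {}" using Pi0 unfolding P_def A_def by blast
      have bal: "card {l. (j, l) \<in> A} = card {l. (l, j) \<in> A}" for j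
      proof (cases "(i0, j) \<in> grid a b")
        case gj: True
        have nA: "nbr E (i0, j) = (\<lambda>l. (Suc i0, l)) ` {l. (j, l) \<in> A}"
        proof (rule set_eqI)
          fix w :: vert
          obtain k l where w: "w = (k, l)" by fastforce
          show "w \<in> nbr E (i0, j) \<longleftrightarrow> w \<in> (\<lambda>l. (Suc i0, l)) ` {l. (j, l) \<in> A}"
          proof
            assume "w \<in> nbr E (i0, j)"
            then have e: "{(i0, j), (k, l)} \<in> E" "(i0, j) \<noteq> (k, l)" unfolding nbr_def w by auto
            have d: "i0 \<noteq> k" "j \<noteq> l" using diag[OF e] by auto
            have "k = Suc i0"
            proof (rule ccontr)
              assume "k \<noteq> Suc i0"
              then have k: "i0 = Suc k" using rs1[OF e(1) d] by simp
              then have "P k" unfolding P_def using e(1) by (metis insert_commute)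
              then show False using minP k by simp
            qed
            then show "w \<in> (\<lambda>l. (Suc i0, l)) ` {l. (j, l) \<in> A}" unfolding w A_def using e(1) by auto
          next
            assume "w \<in> (\<lambda>l. (Suc i0, l)) ` {l. (j, l) \<in> A}"
            then show "w \<in> nbr E (i0, j)" unfolding w A_def nbr_def by auto
          qed
        qed
        have tA: "tnbr E (i0, j) = (\<lambda>l. (Suc i0, l)) ` {l. (l, j) \<in> A}"
        proof (rule set_eqI)
          fix w :: vert
          obtain k l where w: "w = (k, l)" by fastforce
          show "w \<in> tnbr E (i0, j) \<longleftrightarrow> w \<in> (\<lambda>l. (Suc i0, l)) ` {l. (l, j) \<in> A}"
          proof
            assume "w \<in> tnbr E (i0, j)"
            then have e: "{(i0, l), (k, j)} \<in> E" "(k, l) \<noteq> (i0, j)" unfolding tnbr_def w by auto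
            have e2: "(i0, l) \<noteq> (k, j)" using e(2) by auto
            have d: "i0 \<noteq> k" "l \<noteq> j" using diag[OF e(1) e2] by auto
            have "k = Suc i0"
            proof (rule ccontr)
              assume "k \<noteq> Suc i0"
              then have k: "i0 = Suc k" using rs1[OF e(1) d] by simp
              then have "P k" unfolding P_def using e(1) by (metis insert_commute)
              then show False using minP k by simp
            qed
            then show "w \<in> (\<lambda>l. (Suc i0, l)) ` {l. (l, j) \<in> A}" unfolding w A_def using e(1) by auto
          next
            assume "w \<in> (\<lambda>l. (Suc i0, l)) ` {l. (l, j) \<in> A}"
            then show "w \<in> tnbr E (i0, j)" unfolding w A_def tnbr_def by auto
          qed
        qed
        have inj: "inj (\<lambda>l. (Suc i0, l))" by (rule injI) simp
        have "card (nbr E (i0, j)) = card (tnbr E (i0, j))" using cr gj unfolding crit_def by blast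
        then show ?thesis unfolding nA tA card_image[OF inj_on_subset[OF inj subset_UNIV]] .
      next
        case False
        obtain j1 l1 where "{(i0, j1), (Suc i0, l1)} \<in> E" using Pi0 unfolding P_def by blast
        from edge_grid[OF g this] have "i0 < a" unfolding grid_def by simp
        then have jb: "\<not> j < b" using False unfolding grid_def by auto
        have "{l. (j, l) \<in> A} = {}" "{l. (l, j) \<in> A} = {}" using Agrid jb by auto
        then show ?thesis by simp
      qed
      obtain L c where cy: "L > 0" "\<forall>n. c n = c (n mod L)" "inj_on c {..<L}" "\<forall>s. (c s, c (Suc s)) \<in> A"
        using find_cycle[OF finA neA bal] by blast
      interpret cy: cyc i0 L c using cy by unfold_locales auto
      have ZE: "cy.Z \<subseteq> E" unfolding cy.Z_def using cy(4) unfolding A_def by auto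
      have Zne: "cy.Z \<noteq> {}" unfolding cy.Z_def using cy(1) by auto
      have lt: "card (E - cy.Z) < card E"
      proof (rule psubset_card_mono[OF fin])
        show "E - cy.Z \<subset> E" using ZE Zne by blast
      qed
      have g': "grid_graph a b (E - cy.Z)" using grid_graph_subset[OF g] by blast
      have rs': "row_stratified (E - cy.Z)" by (rule rs_sub) blast
      have cz: "card (nbr cy.Z v) = card (tnbr cy.Z v)" for v
      proof -
        obtain x y where v: "v = (x, y)" by fastforce
        show ?thesis unfolding v cy.card_nbr cy.card_tnbr ..
      qed
      have cr': "crit a b (E - cy.Z)" by (rule crit_diff[OF g ZE cz cr])
      have c1: "cone a b (laplacian (E - cy.Z))" using less.hyps[OF lt g' rs' cr'] .
      have c2: "cone a b (laplacian cy.Z)" by (rule cy.cone_Z)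
      show ?thesis
      proof (rule cone_cong[OF cone_add[OF c1 c2]])
        fix p q show "laplacian E p q = laplacian (E - cy.Z) p q + laplacian cy.Z p q"
          by (rule lap_diff[OF g ZE])
      qed
    qed
  qed
qed

definition sE :: "vert set set \<Rightarrow> vert set set" where
  "sE E = (\<lambda>e. prod.swap ` e) ` E"

lemma swap_img2: "prod.swap ` (prod.swap ` X) = (X :: vert set)"
  by (simp add: image_image)

lemma sE_mem: "X \<in> sE E \<longleftrightarrow> prod.swap ` X \<in> E"
proof
  assume "X \<in> sE E"
  then obtain e where "e \<in> E" "X = prod.swap ` e" unfolding sE_def by blast
  then show "prod.swap ` X \<in> E" by (simp add: swap_img2)
next
  assume "prod.swap ` X \<in> E"
  then have "prod.swap ` (prod.swap ` X) \<in> sE E" unfolding sE_def by blast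
  then show "X \<in> sE E" by (simp add: swap_img2)
qed

lemma sE_mem2: "{p, q} \<in> sE E \<longleftrightarrow> {prod.swap p, prod.swap q} \<in> E"
  unfolding sE_mem by simp

lemma sE_grid: assumes g: "grid_graph a b E" shows "grid_graph b a (sE E)"
  unfolding grid_graph_def
proof
  fix e' assume "e' \<in> sE E"
  then obtain e where e: "e \<in> E" "e' = prod.swap ` e" unfolding sE_def by blast
  then obtain u v where uv: "u \<noteq> v" "u \<in> grid a b" "v \<in> grid a b" "e = {u, v}"
    using g unfolding grid_graph_def by meson
  have "prod.swap u \<noteq> prod.swap v" "prod.swap u \<in> grid b a" "prod.swap v \<in> grid b a"
    using uv unfolding grid_def by (auto simp: prod.swap_def split: prod.splits)
  moreover have "e' = {prod.swap u, prod.swap v}" using e uv by simp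
  ultimately show "\<exists>u v. u \<noteq> v \<and> u \<in> grid b a \<and> v \<in> grid b a \<and> e' = {u, v}" by blast
qed

lemma sE_row: assumes "column_stratified E" shows "row_stratified (sE E)"
  unfolding row_stratified_def
proof (intro allI impI)
  fix i j k l assume h: "{(i, j), (k, l)} \<in> sE E \<and> i \<noteq> k \<and> j \<noteq> l"
  then have "{(j, i), (l, k)} \<in> E" using sE_mem2[of "(i, j)" "(k, l)" E] by simp
  then show "\<bar>int i - int k\<bar> = 1" using assms h unfolding column_stratified_def by blast
qed

lemma nbr_sE: "nbr (sE E) (prod.swap v) = prod.swap ` nbr E v"
proof (rule set_eqI)
  fix w :: vert
  have "w \<in> nbr (sE E) (prod.swap v) \<longleftrightarrow> prod.swap w \<in> nbr E v"
    unfolding nbr_def sE_mem2 by (auto simp: prod.swap_def split: prod.splits)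
  also have "\<dots> \<longleftrightarrow> w \<in> prod.swap ` nbr E v"
    by (metis image_iff swap_swap)
  finally show "w \<in> nbr (sE E) (prod.swap v) \<longleftrightarrow> w \<in> prod.swap ` nbr E v" .
qed

lemma tnbr_sE: "tnbr (sE E) (prod.swap v) = prod.swap ` tnbr E v"
proof (rule set_eqI)
  fix w :: vert
  obtain x y where v: "v = (x, y)" by fastforce
  obtain k l where w: "w = (k, l)" by fastforce
  have "w \<in> tnbr (sE E) (prod.swap v) \<longleftrightarrow> (k, l) \<noteq> (y, x) \<and> {(x, k), (l, y)} \<in> E"
    unfolding tnbr_def v w sE_mem2 by (simp add: insert_commute)
  also have "\<dots> \<longleftrightarrow> (l, k) \<in> tnbr E v"
    unfolding tnbr_def v by (auto simp: insert_commute)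
  also have "\<dots> \<longleftrightarrow> w \<in> prod.swap ` tnbr E v"
    unfolding w by (metis image_iff swap_simp swap_swap)
  finally show "w \<in> tnbr (sE E) (prod.swap v) \<longleftrightarrow> w \<in> prod.swap ` tnbr E v" .
qed

lemma inj_swap: "inj (prod.swap :: vert \<Rightarrow> vert)"
  by (rule injI) (metis swap_swap)

lemma crit_sE: assumes "crit a b E" shows "crit b a (sE E)"
  unfolding crit_def
proof
  fix v' assume v': "v' \<in> grid b a"
  define v where "v = prod.swap v'"
  have vv: "v' = prod.swap v" unfolding v_def by simp
  have vg: "v \<in> grid a b" using v' unfolding v_def grid_def by (auto simp: prod.swap_def split: prod.splits)
  have ci: "card (prod.swap ` X) = card X" for X :: "vert set"
    by (rule card_image[OF inj_on_subset[OF inj_swap subset_UNIV]])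
  show "card (nbr (sE E) v') = card (tnbr (sE E) v')"
    unfolding vv nbr_sE tnbr_sE ci using assms vg unfolding crit_def by blast
qed

lemma lap_sE: assumes g: "grid_graph a b E"
  shows "laplacian (sE E) (prod.swap p) (prod.swap q) = laplacian E p q"
proof -
  have l1: "loopless E" using g by (rule grid_graph_loopless)
  have l2: "loopless (sE E)" using sE_grid[OF g] by (rule grid_graph_loopless)
  have ci: "card (prod.swap ` X) = card X" for X :: "vert set"
    by (rule card_image[OF inj_on_subset[OF inj_swap subset_UNIV]])
  have eq: "(prod.swap p = prod.swap q) = (p = q)" by (metis swap_swap)
  show ?thesis unfolding laplacian_nbr[OF l1] laplacian_nbr[OF l2] nbr_sE ci eq sE_mem2 swap_swap ..
qed

definition sw3 :: "real \<times> (nat \<Rightarrow> complex) \<times> (nat \<Rightarrow> complex) \<Rightarrow> real \<times> (nat \<Rightarrow> complex) \<times> (nat \<Rightarrow> complex)" where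
  "sw3 x = (fst x, snd (snd x), fst (snd x))"

lemma tm_swap: "tm x (prod.swap p) (prod.swap q) = tm (sw3 x) p q"
  unfolding tm_def sw3_def by (simp add: mult_ac)

lemma cone_sE: assumes g: "grid_graph a b E" and c: "cone b a (laplacian (sE E))"
  shows "cone a b (laplacian E)"
proof -
  obtain xs where xs0: "\<forall>x\<in>set xs. fst x \<ge> 0"
    and xsL: "\<forall>p\<in>grid b a. \<forall>q\<in>grid b a. laplacian (sE E) p q = (\<Sum>x\<leftarrow>xs. tm x p q)"
    using c unfolding cone_def by blast
  show ?thesis unfolding cone_def
  proof (intro exI[of _ "map sw3 xs"] conjI ballI)
    fix x assume "x \<in> set (map sw3 xs)" then show "fst x \<ge> 0" using xs0 unfolding sw3_def by auto
  next
    fix p q assume p: "p \<in> grid a b" and q: "q \<in> grid a b"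
    have sp: "prod.swap p \<in> grid b a" "prod.swap q \<in> grid b a"
      using p q unfolding grid_def by (auto simp: prod.swap_def split: prod.splits)
    have "laplacian E p q = laplacian (sE E) (prod.swap p) (prod.swap q)" using lap_sE[OF g] by simp
    also have "\<dots> = (\<Sum>x\<leftarrow>xs. tm x (prod.swap p) (prod.swap q))" using xsL sp by blast
    also have "\<dots> = (\<Sum>x\<leftarrow>map sw3 xs. tm x p q)" by (simp add: tm_swap o_def)
    finally show "laplacian E p q = (\<Sum>x\<leftarrow>map sw3 xs. tm x p q)" .
  qed
qed

theorem mainTheorem10:
  fixes a b :: nat and E :: "(nat \<times> nat) set set"
  assumes "grid_graph a b E"
    and "E \<noteq> {}"
    and "row_stratified E \<or> column_stratified E"
  shows "separable a b (rho E) \<longleftrightarrow> degree_criterion a b E"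
proof
  assume "separable a b (rho E)"
  then show "degree_criterion a b E" using necessity[OF assms(1,2)] by blast
next
  assume dc: "degree_criterion a b E"
  have cr: "crit a b E" using dc degree_criterion_iff[OF assms(1)] unfolding crit_def by simp
  show "separable a b (rho E)"
  proof (rule cone_sep[OF assms(1,2)])
    show "cone a b (laplacian E)"
      using assms(3)
    proof
      assume "row_stratified E"
      then show ?thesis by (rule suff_row[OF assms(1) _ cr])
    next
      assume "column_stratified E"
      then have "cone b a (laplacian (sE E))"
        by (intro suff_row[OF sE_grid[OF assms(1)] sE_row crit_sE[OF cr]])
      then show ?thesis by (rule cone_sE[OF assms(1)])
    qed
  qed
qed

end
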